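(* In the setting described in the context, the length $N$ of any full route satisfies $N\le b^{\max}|E|/2$, where $b^{\max}=\max_{e\in E}b(e)$.
   Context: Let $G=(V,E)$ be a finite bipartite graph with color classes $W$ and $F$; the edge joining $w\in W$ and $f\in F$ is written $wf$. Let $b\in\mathbb Z_+^E$ be capacities. For $v\in V$, let $E_v$ be the set of edges incident to $v$, $\mathcal B_v=\{z\in\mathbb Z_+^{E_v}: z(e)\le b(e)\}$, $\mathbf 1^e$ the unit vector of $e$, $|z|=\sum_e|z(e)|$, $\wedge,\vee$ componentwise min and max. Each $v$ has a choice function $C_v:\mathcal B_v\to\mathcal B_v$ with $C_v(z)\le z$, satisfying for all $z,z'$: (A1) $z\ge z'\ge C_v(z)\Rightarrow C_v(z')=C_v(z)$; (A2) $z\ge z'\Rightarrow C_v(z)\wedge z'\le C_v(z')$; (A3) $z\ge z'\Rightarrow |C_v(z)|\ge|C_v(z')|$. Acceptable: $C_v(z)=z$; for distinct acceptable $z,z'$, $z'\prec_v z$ iff $C_v(z\vee z')=z$. $x_v$ is the restriction of $x$ to $E_v$; a g-matching is $x\in\mathbb Z_+^E$, $x\le b$, all $x_v$ acceptable; $x\prec_F y$ (distinct) iff $x_f\preceq_f y_f$ for all $f\in F$. Edge $e\in E_v$ is interesting for $v$ under acceptable $z$ if some $z'\in\mathcal B_v$ has $z'(e)>z(e)$, $z'(e')=z(e')$ for $e'\ne e$, $C_v(z')(e)>z(e)$; $e=wf$ blocks g-matching $x$ if it is interesting for $w$ under $x_w$ and for $f$ under $x_f$. $\mathcal S$ is the set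 of g-matchings with no blocking edge (stable); $(\mathcal S,\prec_F)$ is a nonempty finite distributive lattice with minimum $x^{\min}$ and maximum $x^{\max}$. Rotations: for $x\in\mathcal S$, $U_F^+(x)$ = edges $wf$ interesting for $f$ under $x_f$; $U_F^-(x)$ = edges $wf$ with $x(wf)>0$ not interesting for $f$. Legal $f$-pair: $(a,c)$, $a\in U_F^+(x)\cap E_f$, $c\in E_f\setminus\{a\}$, $C_f(x_f+\mathbf 1^a)=x_f+\mathbf 1^a-\mathbf 1^c$. Legal $w$-pair: $(c,a)$, $c\in U_F^-(x)\cap E_w$, $a\in U_F^+(x)\cap E_w$, $x_w+\mathbf 1^a-\mathbf 1^c$ acceptable for $w$; essential if no $d\in(U_F^+(x)\cap E_w)\setminus\{a\}$ is interesting for $w$ under $x_w+\mathbf 1^a-\mathbf 1^c$. Digraph with vertices $w^e,f^e$ for each $e=wf\in U_F^+(x)\cup U_F^-(x)$, arcs $(w^a,f^a)$ ($a\in U_F^+$), $(f^c,w^c)$ ($c\in U_F^-$), $(f^a,f^c)$ for legal $f$-pairs, $(w^c,w^a)$ for essential $w$-pairs; after repeatedly deleting vertices with no entering arc, the remaining directed cycles correspond to cyclic sequences $(a_1,c_1,\dots,a_k,c_k)$ of distinct edges of $G$, the rotations $R\in\mathcal R(x)$ applicable to $x$, with $\chi^R$ equal to $+1$ on the $a_i$, $-1$ on the $c_i$, $0$ elsewhere. $\tau_R(x)$ is the maximum $\lambda$ with $x+i\chi^R\in\mathcal S$ for $i=1,\dots,\lambda$. A full route is a sequence $x^{\min}=x_0,\dots,x_N=x^{\max}$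 with $x_i=x_{i-1}+\tau_{R_i}(x_{i-1})\chi^{R_i}$, $R_i\in\mathcal R(x_{i-1})$; $N$ is its length. *)

theory Defs
  imports Main "HOL-Library.Function_Algebras"
begin

text \<open>Vectors in Z_+^{E_v} are represented as int-valued functions on edges that
vanish outside E_v.  Edges of the bipartite graph are pairs (w,f) with w in W, f in F.\<close>

definition inB :: "'e set \<Rightarrow> ('e \<Rightarrow> nat) \<Rightarrow> ('e \<Rightarrow> int) \<Rightarrow> bool" where
  "inB Ev b z \<equiv> (\<forall>e. (e \<in> Ev \<longrightarrow> 0 \<le> z e \<and> z e \<le> int (b e)) \<and> (e \<notin> Ev \<longrightarrow> z e = 0))"

definition vnorm :: "'e set \<Rightarrow> ('e \<Rightarrow> int) \<Rightarrow> int" where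
  "vnorm Ev z = (\<Sum>e\<in>Ev. \<bar>z e\<bar>)"

definition unitv :: "'e \<Rightarrow> ('e \<Rightarrow> int)" where
  "unitv a = (\<lambda>e. if e = a then 1 else 0)"

definition restr :: "'e set \<Rightarrow> ('e \<Rightarrow> int) \<Rightarrow> ('e \<Rightarrow> int)" where
  "restr Ev x = (\<lambda>e. if e \<in> Ev then x e else 0)"

definition choice_fun :: "'e set \<Rightarrow> ('e \<Rightarrow> nat) \<Rightarrow> (('e \<Rightarrow> int) \<Rightarrow> ('e \<Rightarrow> int)) \<Rightarrow> bool" where
  "choice_fun Ev b Cv \<equiv>
     (\<forall>z. inB Ev b z \<longrightarrow> inB Ev b (Cv z) \<and> Cv z \<le> z) \<and>
     \<comment> \<open>(A1)\<close>
     (\<forall>z z'. inB Ev b z \<longrightarrow> inB Ev b z' \<longrightarrow> z \<ge> z' \<longrightarrow> z' \<ge> Cv z \<longrightarrow> Cv z' = Cv z) \<and>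
     \<comment> \<open>(A2)\<close>
     (\<forall>z z'. inB Ev b z \<longrightarrow> inB Ev b z' \<longrightarrow> z \<ge> z' \<longrightarrow> inf (Cv z) z' \<le> Cv z') \<and>
     \<comment> \<open>(A3)\<close>
     (\<forall>z z'. inB Ev b z \<longrightarrow> inB Ev b z' \<longrightarrow> z \<ge> z' \<longrightarrow> vnorm Ev (Cv z) \<ge> vnorm Ev (Cv z'))"

definition acceptable :: "'e set \<Rightarrow> ('e \<Rightarrow> nat) \<Rightarrow> (('e \<Rightarrow> int) \<Rightarrow> ('e \<Rightarrow> int)) \<Rightarrow> ('e \<Rightarrow> int) \<Rightarrow> bool" where
  "acceptable Ev b Cv z \<equiv> inB Ev b z \<and> Cv z = z"

definition pref_less :: "'e set \<Rightarrow> ('e \<Rightarrow> nat) \<Rightarrow> (('e \<Rightarrow> int) \<Rightarrow> ('e \<Rightarrow> int)) \<Rightarrow> ('e \<Rightarrow> int) \<Rightarrow> ('e \<Rightarrow> int) \<Rightarrow> bool" where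
  "pref_less Ev b Cv z' z \<equiv> acceptable Ev b Cv z \<and> acceptable Ev b Cv z' \<and> z \<noteq> z' \<and> Cv (sup z z') = z"

definition pref_le :: "'e set \<Rightarrow> ('e \<Rightarrow> nat) \<Rightarrow> (('e \<Rightarrow> int) \<Rightarrow> ('e \<Rightarrow> int)) \<Rightarrow> ('e \<Rightarrow> int) \<Rightarrow> ('e \<Rightarrow> int) \<Rightarrow> bool" where
  "pref_le Ev b Cv z' z \<equiv> z' = z \<or> pref_less Ev b Cv z' z"

definition interesting :: "'e set \<Rightarrow> ('e \<Rightarrow> nat) \<Rightarrow> (('e \<Rightarrow> int) \<Rightarrow> ('e \<Rightarrow> int)) \<Rightarrow> ('e \<Rightarrow> int) \<Rightarrow> 'e \<Rightarrow> bool" where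
  "interesting Ev b Cv z e \<equiv> e \<in> Ev \<and>
     (\<exists>z'. inB Ev b z' \<and> z' e > z e \<and> (\<forall>e'. e' \<noteq> e \<longrightarrow> z' e' = z e') \<and> Cv z' e > z e)"

definition Ew :: "('w \<times> 'f) set \<Rightarrow> 'w \<Rightarrow> ('w \<times> 'f) set" where
  "Ew E w = {e \<in> E. fst e = w}"

definition Ef :: "('w \<times> 'f) set \<Rightarrow> 'f \<Rightarrow> ('w \<times> 'f) set" where
  "Ef E f = {e \<in> E. snd e = f}"

type_synonym ('w, 'f) vec = "('w \<times> 'f) \<Rightarrow> int"
type_synonym ('w, 'f) cfun = "('w, 'f) vec \<Rightarrow> ('w, 'f) vec"

definition gmatching :: "'w set \<Rightarrow> 'f set \<Rightarrow> ('w \<times> 'f) set \<Rightarrow> ('w \<times> 'f \<Rightarrow> nat)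
    \<Rightarrow> ('w \<Rightarrow> ('w, 'f) cfun) \<Rightarrow> ('f \<Rightarrow> ('w, 'f) cfun) \<Rightarrow> ('w, 'f) vec \<Rightarrow> bool" where
  "gmatching W F E b Cw Cf x \<equiv>
     (\<forall>e. e \<notin> E \<longrightarrow> x e = 0) \<and> (\<forall>e\<in>E. 0 \<le> x e \<and> x e \<le> int (b e)) \<and>
     (\<forall>w\<in>W. acceptable (Ew E w) b (Cw w) (restr (Ew E w) x)) \<and>
     (\<forall>f\<in>F. acceptable (Ef E f) b (Cf f) (restr (Ef E f) x))"

definition blocking :: "('w \<times> 'f) set \<Rightarrow> ('w \<times> 'f \<Rightarrow> nat)
    \<Rightarrow> ('w \<Rightarrow> ('w, 'f) cfun) \<Rightarrow> ('f \<Rightarrow> ('w, 'f) cfun) \<Rightarrow> ('w, 'f) vec \<Rightarrow> ('w \<times> 'f) \<Rightarrow> bool" where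
  "blocking E b Cw Cf x e \<equiv> e \<in> E \<and>
     interesting (Ew E (fst e)) b (Cw (fst e)) (restr (Ew E (fst e)) x) e \<and>
     interesting (Ef E (snd e)) b (Cf (snd e)) (restr (Ef E (snd e)) x) e"

definition stable :: "'w set \<Rightarrow> 'f set \<Rightarrow> ('w \<times> 'f) set \<Rightarrow> ('w \<times> 'f \<Rightarrow> nat)
    \<Rightarrow> ('w \<Rightarrow> ('w, 'f) cfun) \<Rightarrow> ('f \<Rightarrow> ('w, 'f) cfun) \<Rightarrow> ('w, 'f) vec \<Rightarrow> bool" where
  "stable W F E b Cw Cf x \<equiv> gmatching W F E b Cw Cf x \<and> (\<nexists>e. blocking E b Cw Cf x e)"

definition Fle :: "'f set \<Rightarrow> ('w \<times> 'f) set \<Rightarrow> ('w \<times> 'f \<Rightarrow> nat)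
    \<Rightarrow> ('f \<Rightarrow> ('w, 'f) cfun) \<Rightarrow> ('w, 'f) vec \<Rightarrow> ('w, 'f) vec \<Rightarrow> bool" where
  "Fle F E b Cf x y \<equiv> x = y \<or> (\<forall>f\<in>F. pref_le (Ef E f) b (Cf f) (restr (Ef E f) x) (restr (Ef E f) y))"

definition is_xmin :: "'w set \<Rightarrow> 'f set \<Rightarrow> ('w \<times> 'f) set \<Rightarrow> ('w \<times> 'f \<Rightarrow> nat)
    \<Rightarrow> ('w \<Rightarrow> ('w, 'f) cfun) \<Rightarrow> ('f \<Rightarrow> ('w, 'f) cfun) \<Rightarrow> ('w, 'f) vec \<Rightarrow> bool" where
  "is_xmin W F E b Cw Cf x \<equiv> stable W F E b Cw Cf x \<and>
     (\<forall>y. stable W F E b Cw Cf y \<longrightarrow> Fle F E b Cf x y)"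

definition is_xmax :: "'w set \<Rightarrow> 'f set \<Rightarrow> ('w \<times> 'f) set \<Rightarrow> ('w \<times> 'f \<Rightarrow> nat)
    \<Rightarrow> ('w \<Rightarrow> ('w, 'f) cfun) \<Rightarrow> ('f \<Rightarrow> ('w, 'f) cfun) \<Rightarrow> ('w, 'f) vec \<Rightarrow> bool" where
  "is_xmax W F E b Cw Cf x \<equiv> stable W F E b Cw Cf x \<and>
     (\<forall>y. stable W F E b Cw Cf y \<longrightarrow> Fle F E b Cf y x)"

definition Uplus :: "('w \<times> 'f) set \<Rightarrow> ('w \<times> 'f \<Rightarrow> nat)
    \<Rightarrow> ('f \<Rightarrow> ('w, 'f) cfun) \<Rightarrow> ('w, 'f) vec \<Rightarrow> ('w \<times> 'f) set" where
  "Uplus E b Cf x = {e \<in> E. interesting (Ef E (snd e)) b (Cf (snd e)) (restr (Ef E (snd e)) x) e}"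

definition Uminus :: "('w \<times> 'f) set \<Rightarrow> ('w \<times> 'f \<Rightarrow> nat)
    \<Rightarrow> ('f \<Rightarrow> ('w, 'f) cfun) \<Rightarrow> ('w, 'f) vec \<Rightarrow> ('w \<times> 'f) set" where
  "Uminus E b Cf x = {e \<in> E. x e > 0 \<and> \<not> interesting (Ef E (snd e)) b (Cf (snd e)) (restr (Ef E (snd e)) x) e}"

definition legal_fpair :: "('w \<times> 'f) set \<Rightarrow> ('w \<times> 'f \<Rightarrow> nat)
    \<Rightarrow> ('f \<Rightarrow> ('w, 'f) cfun) \<Rightarrow> ('w, 'f) vec \<Rightarrow> ('w \<times> 'f) \<Rightarrow> ('w \<times> 'f) \<Rightarrow> bool" where
  "legal_fpair E b Cf x a c \<equiv>
     (let f = snd a; xf = restr (Ef E f) x in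
       a \<in> Uplus E b Cf x \<inter> Ef E f \<and> c \<in> Ef E f - {a} \<and>
       Cf f (xf + unitv a) = xf + unitv a - unitv c)"

definition legal_wpair :: "('w \<times> 'f) set \<Rightarrow> ('w \<times> 'f \<Rightarrow> nat) \<Rightarrow> ('w \<Rightarrow> ('w, 'f) cfun)
    \<Rightarrow> ('f \<Rightarrow> ('w, 'f) cfun) \<Rightarrow> ('w, 'f) vec \<Rightarrow> ('w \<times> 'f) \<Rightarrow> ('w \<times> 'f) \<Rightarrow> bool" where
  "legal_wpair E b Cw Cf x c a \<equiv>
     (let w = fst c; xw = restr (Ew E w) x in
       c \<in> Uminus E b Cf x \<inter> Ew E w \<and> a \<in> Uplus E b Cf x \<inter> Ew E w \<and>
       acceptable (Ew E w) b (Cw w) (xw + unitv a - unitv c))"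

definition essential_wpair :: "('w \<times> 'f) set \<Rightarrow> ('w \<times> 'f \<Rightarrow> nat) \<Rightarrow> ('w \<Rightarrow> ('w, 'f) cfun)
    \<Rightarrow> ('f \<Rightarrow> ('w, 'f) cfun) \<Rightarrow> ('w, 'f) vec \<Rightarrow> ('w \<times> 'f) \<Rightarrow> ('w \<times> 'f) \<Rightarrow> bool" where
  "essential_wpair E b Cw Cf x c a \<equiv> legal_wpair E b Cw Cf x c a \<and>
     (let w = fst c; xw = restr (Ew E w) x in
       \<not> (\<exists>d \<in> (Uplus E b Cf x \<inter> Ew E w) - {a}.
            interesting (Ew E w) b (Cw w) (xw + unitv a - unitv c) d))"

text \<open>Digraph: vertex (e, True) is w^e, vertex (e, False) is f^e.\<close>
definition dverts :: "('w \<times> 'f) set \<Rightarrow> ('w \<times> 'f \<Rightarrow> nat)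
    \<Rightarrow> ('f \<Rightarrow> ('w, 'f) cfun) \<Rightarrow> ('w, 'f) vec \<Rightarrow> (('w \<times> 'f) \<times> bool) set" where
  "dverts E b Cf x = (Uplus E b Cf x \<union> Uminus E b Cf x) \<times> UNIV"

definition darcs :: "('w \<times> 'f) set \<Rightarrow> ('w \<times> 'f \<Rightarrow> nat) \<Rightarrow> ('w \<Rightarrow> ('w, 'f) cfun)
    \<Rightarrow> ('f \<Rightarrow> ('w, 'f) cfun) \<Rightarrow> ('w, 'f) vec \<Rightarrow> ((('w \<times> 'f) \<times> bool) \<times> (('w \<times> 'f) \<times> bool)) set" where
  "darcs E b Cw Cf x =
    ({((a, True), (a, False)) | a. a \<in> Uplus E b Cf x} \<union>
     {((c, False), (c, True)) | c. c \<in> Uminus E b Cf x} \<union>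
     {((a, False), (c, False)) | a c. legal_fpair E b Cf x a c} \<union>
     {((c, True), (a, True)) | c a. essential_wpair E b Cw Cf x c a})
    \<inter> (dverts E b Cf x \<times> dverts E b Cf x)"

text \<open>Vertices surviving the repeated deletion of vertices with no entering arc:
  the largest vertex subset in which every vertex has an entering arc from the subset.\<close>
definition dremain :: "('w \<times> 'f) set \<Rightarrow> ('w \<times> 'f \<Rightarrow> nat) \<Rightarrow> ('w \<Rightarrow> ('w, 'f) cfun)
    \<Rightarrow> ('f \<Rightarrow> ('w, 'f) cfun) \<Rightarrow> ('w, 'f) vec \<Rightarrow> (('w \<times> 'f) \<times> bool) set" where
  "dremain E b Cw Cf x = \<Union>{X. X \<subseteq> dverts E b Cf x \<and>
      (\<forall>v\<in>X. \<exists>u\<in>X. (u, v) \<in> darcs E b Cw Cf x)}"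

text \<open>The digraph cycle w^{a1} f^{a1} f^{c1} w^{c1} w^{a2} ... of a sequence [a1,c1,...,ak,ck].\<close>
definition cycle_verts :: "('w \<times> 'f) list \<Rightarrow> (('w \<times> 'f) \<times> bool) list" where
  "cycle_verts R = concat (map (\<lambda>j. if even j then [(R ! j, True), (R ! j, False)]
                                   else [(R ! j, False), (R ! j, True)]) [0..<length R])"

text \<open>R is a rotation applicable to the stable x: a directed cycle of the remaining digraph,
  given by a cyclic sequence (a1,c1,...,ak,ck) of distinct edges.\<close>
definition rotation :: "'w set \<Rightarrow> 'f set \<Rightarrow> ('w \<times> 'f) set \<Rightarrow> ('w \<times> 'f \<Rightarrow> nat)
    \<Rightarrow> ('w \<Rightarrow> ('w, 'f) cfun) \<Rightarrow> ('f \<Rightarrow> ('w, 'f) cfun) \<Rightarrow> ('w, 'f) vec \<Rightarrow> ('w \<times> 'f) list \<Rightarrow> bool" where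
  "rotation W F E b Cw Cf x R \<equiv> stable W F E b Cw Cf x \<and>
     R \<noteq> [] \<and> even (length R) \<and> distinct R \<and>
     (let vs = cycle_verts R in
       \<forall>i < length vs. vs ! i \<in> dremain E b Cw Cf x \<and>
         (vs ! i, vs ! ((i + 1) mod length vs)) \<in> darcs E b Cw Cf x)"

definition chi :: "('w \<times> 'f) list \<Rightarrow> ('w, 'f) vec" where
  "chi R = (\<lambda>e. \<Sum>j<length R. if R ! j = e then (if even j then 1 else -1) else 0)"

definition tau :: "'w set \<Rightarrow> 'f set \<Rightarrow> ('w \<times> 'f) set \<Rightarrow> ('w \<times> 'f \<Rightarrow> nat)
    \<Rightarrow> ('w \<Rightarrow> ('w, 'f) cfun) \<Rightarrow> ('f \<Rightarrow> ('w, 'f) cfun) \<Rightarrow> ('w, 'f) vec \<Rightarrow> ('w \<times> 'f) list \<Rightarrow> nat" where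
  "tau W F E b Cw Cf x R = (GREATEST lam::nat. \<forall>i\<in>{1..lam}.
       stable W F E b Cw Cf (\<lambda>e. x e + int i * chi R e))"

text \<open>A full route x_0, ..., x_N (list xs) with rotations R_1, ..., R_N (list Rs, 0-indexed).\<close>
definition full_route :: "'w set \<Rightarrow> 'f set \<Rightarrow> ('w \<times> 'f) set \<Rightarrow> ('w \<times> 'f \<Rightarrow> nat)
    \<Rightarrow> ('w \<Rightarrow> ('w, 'f) cfun) \<Rightarrow> ('f \<Rightarrow> ('w, 'f) cfun)
    \<Rightarrow> ('w, 'f) vec list \<Rightarrow> ('w \<times> 'f) list list \<Rightarrow> bool" where
  "full_route W F E b Cw Cf xs Rs \<equiv>
     length xs = Suc (length Rs) \<and>
     is_xmin W F E b Cw Cf (xs ! 0) \<and> is_xmax W F E b Cw Cf (xs ! length Rs) \<and>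
     (\<forall>i < length Rs. rotation W F E b Cw Cf (xs ! i) (Rs ! i) \<and>
        xs ! Suc i = (\<lambda>e. (xs ! i) e + int (tau W F E b Cw Cf (xs ! i) (Rs ! i)) * chi (Rs ! i) e))"

end

theory Submission
  imports Defs
begin


definition ind :: "'e set \<Rightarrow> 'e \<Rightarrow> int" where
  "ind S e = (if e \<in> S then 1 else 0)"

locale cfv =
  fixes Ev :: "'e set" and b :: "'e \<Rightarrow> nat" and C :: "('e \<Rightarrow> int) \<Rightarrow> ('e \<Rightarrow> int)"
  assumes cf: "choice_fun Ev b C" and fin: "finite Ev"
begin

lemma cf1: "\<forall>z. inB Ev b z \<longrightarrow> inB Ev b (C z) \<and> C z \<le> z"
  using cf[unfolded choice_fun_def] by (rule conjunct1)
lemma cf2: "\<forall>z z'. inB Ev b z \<longrightarrow> inB Ev b z' \<longrightarrow> z \<ge> z' \<longrightarrow> z' \<ge> C z \<longrightarrow> C z' = C z"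
  using cf[unfolded choice_fun_def] by (rule conjunct1[OF conjunct2])
lemma cf3: "\<forall>z z'. inB Ev b z \<longrightarrow> inB Ev b z' \<longrightarrow> z \<ge> z' \<longrightarrow> inf (C z) z' \<le> C z'"
  using cf[unfolded choice_fun_def] by (rule conjunct1[OF conjunct2[OF conjunct2]])
lemma cf4: "\<forall>z z'. inB Ev b z \<longrightarrow> inB Ev b z' \<longrightarrow> z \<ge> z' \<longrightarrow> vnorm Ev (C z) \<ge> vnorm Ev (C z')"
  using cf[unfolded choice_fun_def] by (rule conjunct2[OF conjunct2[OF conjunct2]])

lemma C_inB: "inB Ev b z \<Longrightarrow> inB Ev b (C z)"
  using cf1 by blast
lemma C_le: "inB Ev b z \<Longrightarrow> C z \<le> z"
  using cf1 by blast
lemma C_lep: "inB Ev b z \<Longrightarrow> C z e \<le> z e"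
  using C_le by (simp add: le_fun_def)
lemma A1: "inB Ev b z \<Longrightarrow> inB Ev b z' \<Longrightarrow> z' \<le> z \<Longrightarrow> C z \<le> z' \<Longrightarrow> C z' = C z"
  using cf2 by blast
lemma A2: "inB Ev b z \<Longrightarrow> inB Ev b z' \<Longrightarrow> z' \<le> z \<Longrightarrow> min (C z e) (z' e) \<le> C z' e"
proof -
  assume "inB Ev b z" "inB Ev b z'" "z' \<le> z"
  then have "inf (C z) z' \<le> C z'" using cf3 by blast
  then show ?thesis by (simp add: le_fun_def inf_min)
qed
lemma A3: "inB Ev b z \<Longrightarrow> inB Ev b z' \<Longrightarrow> z' \<le> z \<Longrightarrow> vnorm Ev (C z') \<le> vnorm Ev (C z)"
  using cf4 by blast

lemma inB_nn: "inB Ev b z \<Longrightarrow> 0 \<le> z e"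
  unfolding inB_def by (cases "e \<in> Ev") auto
lemma inB_out: "inB Ev b z \<Longrightarrow> e \<notin> Ev \<Longrightarrow> z e = 0"
  unfolding inB_def by auto
lemma inB_ub: "inB Ev b z \<Longrightarrow> z e \<le> int (b e)"
  unfolding inB_def by (cases "e \<in> Ev") auto

lemma vnorm_inB: "inB Ev b z \<Longrightarrow> vnorm Ev z = (\<Sum>e\<in>Ev. z e)"
  unfolding vnorm_def using inB_nn[of z] by (intro sum.cong) auto

lemma vn_eq:
  assumes "inB Ev b v" "inB Ev b Y" "v \<le> Y" "vnorm Ev Y \<le> vnorm Ev v"
  shows "v = Y"
proof -
  have le: "\<And>e. v e \<le> Y e" using assms(3) by (simp add: le_fun_def)
  have "(\<Sum>e\<in>Ev. Y e - v e) = vnorm Ev Y - vnorm Ev v"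
    using assms by (simp add: vnorm_inB sum_subtractf)
  also have "\<dots> \<le> 0" using assms(4) by simp
  finally have s: "(\<Sum>e\<in>Ev. Y e - v e) \<le> 0" .
  have nn: "\<forall>e\<in>Ev. 0 \<le> Y e - v e" using le by simp
  then have "(\<Sum>e\<in>Ev. Y e - v e) \<ge> 0" by (simp add: sum_nonneg)
  then have "(\<Sum>e\<in>Ev. Y e - v e) = 0" using s by simp
  then have "\<forall>e\<in>Ev. Y e - v e = 0"
    using sum_nonneg_eq_0_iff[OF fin, of "\<lambda>e. Y e - v e"] nn by blast
  then show ?thesis
    using assms(1,2) by (intro ext) (metis inB_out eq_iff_diff_eq_0)
qed

lemma vn_less:
  assumes "inB Ev b v" "inB Ev b Y" "Y \<le> v" "e \<in> Ev" "Y e < v e"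
  shows "vnorm Ev Y < vnorm Ev v"
proof -
  have "(\<Sum>e\<in>Ev. Y e) < (\<Sum>e\<in>Ev. v e)"
    using assms by (intro sum_strict_mono_ex1[OF fin]) (auto simp: le_fun_def)
  then show ?thesis using assms by (simp add: vnorm_inB)
qed


lemma inB_I:
  assumes "\<And>e. e \<in> Ev \<Longrightarrow> 0 \<le> z e" "\<And>e. e \<in> Ev \<Longrightarrow> z e \<le> int (b e)" "\<And>e. e \<notin> Ev \<Longrightarrow> z e = 0"
  shows "inB Ev b z"
  using assms unfolding inB_def by blast

lemma inB_upd:
  assumes "inB Ev b u" "e \<in> Ev" "0 \<le> k" "k \<le> int (b e)"
  shows "inB Ev b (u(e:=k))"
  using assms inB_nn[OF assms(1)] inB_ub[OF assms(1)] inB_out[OF assms(1)] by (intro inB_I) auto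

lemma inB_between:
  assumes "inB Ev b T" "\<And>e. 0 \<le> z e" "\<And>e. z e \<le> T e"
  shows "inB Ev b z"
proof (rule inB_I)
  fix e show "0 \<le> z e" using assms by blast
next
  fix e show "z e \<le> int (b e)" using assms(3)[of e] inB_ub[OF assms(1), of e] by linarith
next
  fix e assume "e \<notin> Ev" then show "z e = 0" using assms(2,3)[of e] inB_out[OF assms(1)] by force
qed

lemma ni_upd:
  assumes acc: "acceptable Ev b C u" and e: "e \<in> Ev" and ni: "\<not> interesting Ev b C u e"
    and k: "u e < k" "k \<le> int (b e)"
  shows "C (u(e:=k)) = u"
proof -
  have uB: "inB Ev b u" and Cu: "C u = u" using acc unfolding acceptable_def by auto
  have zB: "inB Ev b (u(e:=k))" using inB_upd[OF uB e] k inB_nn[OF uB, of e] by auto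
  have ce: "C (u(e:=k)) e \<le> u e"
  proof (rule ccontr)
    assume "\<not> C (u(e:=k)) e \<le> u e"
    then have "interesting Ev b C u e"
      unfolding interesting_def using e zB k by (intro conjI exI[of _ "u(e:=k)"]) auto
    then show False using ni by blast
  qed
  have le: "C (u(e:=k)) \<le> u"
    unfolding le_fun_def
  proof
    fix e' show "C (u(e:=k)) e' \<le> u e'"
      using ce C_lep[OF zB, of e'] by (cases "e' = e") auto
  qed
  have "u \<le> u(e:=k)" using k by (simp add: le_fun_def)
  then have "C u = C (u(e:=k))" using A1[OF zB uB _ le] by blast
  then show ?thesis using Cu by simp
qed

lemma addni:
  assumes acc: "acceptable Ev b C u" and g: "\<And>e. 0 \<le> g e"
    and supp: "\<And>e. g e \<noteq> 0 \<Longrightarrow> e \<in> Ev \<and> \<not> interesting Ev b C u e"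
    and B: "inB Ev b (\<lambda>e. u e + g e)"
  shows "C (\<lambda>e. u e + g e) = u"
proof -
  define T where "T = (\<lambda>e. u e + g e)"
  have uB: "inB Ev b u" and Cu: "C u = u" using acc unfolding acceptable_def by auto
  have TB: "inB Ev b T" using B T_def by simp
  have vle: "C T e \<le> u e" for e
  proof (cases "g e = 0")
    case True then show ?thesis using C_lep[OF TB, of e] T_def by simp
  next
    case False
    then have e: "e \<in> Ev" and ni: "\<not> interesting Ev b C u e" using supp by auto
    have gp: "g e > 0" using g[of e] False by simp
    define k where "k = u e + g e"
    have kb: "k \<le> int (b e)" using inB_ub[OF TB, of e] T_def k_def by simp
    have Cupd: "C (u(e:=k)) = u" using ni_upd[OF acc e ni _ kb] gp k_def by simp
    have zB: "inB Ev b (u(e:=k))" using inB_upd[OF uB e _ kb] inB_nn[OF uB, of e] gp k_def by simp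
    have zle: "u(e:=k) \<le> T" using g unfolding le_fun_def T_def k_def by auto
    have "min (C T e) ((u(e:=k)) e) \<le> C (u(e:=k)) e" using A2[OF TB zB zle] .
    then have "min (C T e) k \<le> u e" using Cupd by simp
    moreover have "C T e \<le> k" using C_lep[OF TB, of e] T_def k_def by simp
    ultimately show ?thesis using gp k_def by linarith
  qed
  have "u \<le> T" using g unfolding le_fun_def T_def by auto
  moreover have "C T \<le> u" using vle by (simp add: le_fun_def)
  ultimately have "C u = C T" using A1[OF TB uB] by blast
  then show ?thesis using Cu T_def by simp
qed

lemma pref_int:
  assumes XB: "inB Ev b X" and YB: "inB Ev b Y"
    and u: "C (\<lambda>e. max (X e) (Y e)) = Y"
    and int: "interesting Ev b C Y e"
  shows "interesting Ev b C X e"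
proof -
  define U where "U = (\<lambda>e. max (X e) (Y e))"
  have UB: "inB Ev b U" unfolding U_def
    using inB_nn[OF XB] inB_nn[OF YB] inB_out[OF XB] inB_out[OF YB] inB_ub[OF XB] inB_ub[OF YB]
    by (intro inB_I) (auto simp: max_def)
  have CU: "C U = Y" using u U_def by simp
  from int obtain z' where e: "e \<in> Ev" and z'B: "inB Ev b z'" and gt: "z' e > Y e"
    and eq: "\<forall>e'. e' \<noteq> e \<longrightarrow> z' e' = Y e'" and ch: "C z' e > Y e"
    unfolding interesting_def by blast
  define k where "k = z' e"
  define V where "V = U(e := max k (U e))"
  have VB: "inB Ev b V" unfolding V_def
    using inB_upd[OF UB e, of "max k (U e)"] inB_ub[OF z'B, of e] inB_ub[OF UB, of e] inB_nn[OF UB, of e]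
    k_def by simp
  have UV: "U \<le> V" unfolding V_def le_fun_def by auto
  have c1: "C V e > Y e"
  proof (rule ccontr)
    assume "\<not> C V e > Y e"
    then have "C V e \<le> Y e" by simp
    then have "C V \<le> U" unfolding le_fun_def
      using C_lep[OF VB] U_def V_def by (metis fun_upd_other max.cobounded2 order_trans)
    then have "C U = C V" using A1[OF VB UB UV] by blast
    then have CV: "C V = Y" using CU by simp
    have "z' \<le> V" unfolding le_fun_def V_def U_def k_def using eq by auto
    moreover have "C V \<le> z'" unfolding le_fun_def using CV eq gt by (metis order_less_imp_le order_refl)
    ultimately have "C z' = C V" using A1[OF VB z'B] by blast
    then show False using CV ch by simp
  qed
  have c2: "X e \<le> Y e"
  proof (rule ccontr)
    assume "\<not> X e \<le> Y e"
    then have Ue: "U e = X e" "X e > Y e" unfolding U_def by auto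
    have "min (C V e) (U e) \<le> C U e" using A2[OF VB UB UV] .
    then show False using Ue c1 CU by simp
  qed
  define x' where "x' = X(e := V e)"
  have x'B: "inB Ev b x'" unfolding x'_def
    using inB_upd[OF XB e, of "V e"] inB_nn[OF VB, of e] inB_ub[OF VB, of e] by simp
  have x'V: "x' \<le> V" unfolding le_fun_def x'_def V_def U_def by auto
  have "min (C V e) (x' e) \<le> C x' e" using A2[OF VB x'B x'V] .
  moreover have "C V e \<le> x' e" using C_lep[OF VB, of e] x'_def by simp
  ultimately have "C x' e > X e" using c1 c2 by simp
  moreover have "x' e > X e" using c2 gt k_def x'_def V_def by simp
  ultimately show ?thesis unfolding interesting_def using e x'B x'_def by auto
qed


lemma sum_ind: "A \<subseteq> Ev \<Longrightarrow> (\<Sum>e\<in>Ev. ind A e) = int (card A)"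
proof -
  assume "A \<subseteq> Ev"
  then have "(\<Sum>e\<in>Ev. ind A e) = (\<Sum>e\<in>{e\<in>Ev. e \<in> A}. 1)"
    unfolding ind_def using sum.inter_filter[OF fin, of "\<lambda>_. (1::int)" "\<lambda>e. e \<in> A"] by simp
  also have "{e\<in>Ev. e \<in> A} = A" using \<open>A \<subseteq> Ev\<close> by auto
  finally show ?thesis by simp
qed

lemma vn_comb:
  assumes XB: "inB Ev b X" and ZB: "inB Ev b Z" and "A \<subseteq> Ev" "Cs \<subseteq> Ev"
    and Z: "\<And>e. Z e = X e + ind A e - ind Cs e"
  shows "vnorm Ev Z = vnorm Ev X + int (card A) - int (card Cs)"
proof -
  have "vnorm Ev Z = (\<Sum>e\<in>Ev. X e + ind A e - ind Cs e)" using vnorm_inB[OF ZB] Z by simp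
  also have "\<dots> = (\<Sum>e\<in>Ev. X e) + (\<Sum>e\<in>Ev. ind A e) - (\<Sum>e\<in>Ev. ind Cs e)"
    by (simp add: sum.distrib sum_subtractf)
  finally show ?thesis using sum_ind assms vnorm_inB[OF XB] by simp
qed

lemma fside1:
  assumes Xa: "acceptable Ev b C X" and AE: "A \<subseteq> Ev" and CE: "Cs \<subseteq> Ev" and dis: "A \<inter> Cs = {}"
    and card: "card A = card Cs"
    and pair: "\<forall>c\<in>Cs. \<exists>a\<in>A. C (\<lambda>e. X e + unitv a e) = (\<lambda>e. X e + unitv a e - unitv c e)"
    and TB: "inB Ev b (\<lambda>e. X e + ind A e)"
    and YB: "inB Ev b (\<lambda>e. X e + ind A e - ind Cs e)"
  shows "C (\<lambda>e. X e + ind A e) = (\<lambda>e. X e + ind A e - ind Cs e)"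
proof -
  define T where "T = (\<lambda>e. X e + ind A e)"
  define Y where "Y = (\<lambda>e. X e + ind A e - ind Cs e)"
  have XB: "inB Ev b X" and CX: "C X = X" using Xa unfolding acceptable_def by auto
  show ?thesis
  proof (cases "Cs = {}")
    case True
    then have "A = {}" using card fin AE by (metis card_0_eq finite_subset card.empty)
    then show ?thesis using True CX by (simp add: ind_def)
  next
    case False
    then obtain c0 where c0: "c0 \<in> Cs" by blast
    from bspec[OF pair c0] obtain a0 where a0: "a0 \<in> A" and p0: "C (\<lambda>e. X e + unitv a0 e) = (\<lambda>e. X e + unitv a0 e - unitv c0 e)"
      ..
    have TB': "inB Ev b T" using TB T_def by simp
    have YB': "inB Ev b Y" using YB Y_def by simp
    have W1: "inB Ev b (\<lambda>e. X e + unitv a0 e)"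
      using inB_between[OF TB', of "\<lambda>e. X e + unitv a0 e"] inB_nn[OF XB] a0
      unfolding T_def unitv_def ind_def by auto
    have W1T: "(\<lambda>e. X e + unitv a0 e) \<le> T" using a0 unfolding le_fun_def T_def unitv_def ind_def by auto
    have "vnorm Ev (C (\<lambda>e. X e + unitv a0 e)) \<le> vnorm Ev (C T)" using A3[OF TB' W1 W1T] .
    moreover have "vnorm Ev (C (\<lambda>e. X e + unitv a0 e)) = vnorm Ev X"
    proof -
      have WB: "inB Ev b (\<lambda>e. X e + unitv a0 e - unitv c0 e)" using C_inB[OF W1] p0 by simp
      have "vnorm Ev (\<lambda>e. X e + unitv a0 e - unitv c0 e) = vnorm Ev X + int (card {a0}) - int (card {c0})"
        using vn_comb[OF XB WB, of "{a0}" "{c0}"] a0 c0 AE CE unfolding unitv_def ind_def by auto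
      then show ?thesis using p0 by simp
    qed
    moreover have "vnorm Ev Y = vnorm Ev X"
      using vn_comb[OF XB YB' AE CE] card Y_def by simp
    ultimately have vn: "vnorm Ev Y \<le> vnorm Ev (C T)" by simp
    have le: "C T \<le> Y" unfolding le_fun_def
    proof
      fix e
      show "C T e \<le> Y e"
      proof (cases "e \<in> Cs")
        case True
        from bspec[OF pair True] obtain a where a: "a \<in> A" and pa: "C (\<lambda>e'. X e' + unitv a e') = (\<lambda>e'. X e' + unitv a e' - unitv e e')"
          ..
        have ea: "e \<noteq> a" using dis a True by blast
        have WB: "inB Ev b (\<lambda>e. X e + unitv a e)"
          using inB_between[OF TB', of "\<lambda>e. X e + unitv a e"] inB_nn[OF XB] a
          unfolding T_def unitv_def ind_def by auto
        have WT: "(\<lambda>e. X e + unitv a e) \<le> T" using a unfolding le_fun_def T_def unitv_def ind_def by auto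
        have "min (C T e) (X e + unitv a e) \<le> C (\<lambda>e. X e + unitv a e) e" using A2[OF TB' WB WT] by simp
        then have "min (C T e) (X e) \<le> X e - 1" using pa ea unfolding unitv_def by simp
        moreover have "e \<notin> A" using True dis by blast
        then have "C T e \<le> X e" using C_lep[OF TB', of e] unfolding T_def ind_def by simp
        ultimately show ?thesis using True dis unfolding Y_def ind_def by auto
      next
        case False
        then show ?thesis using C_lep[OF TB', of e] unfolding T_def Y_def ind_def by auto
      qed
    qed
    have "C T = Y" using vn_eq[OF C_inB[OF TB'] YB' le vn] .
    then show ?thesis using T_def Y_def by simp
  qed
qed

lemma fsidet:
  assumes XB: "inB Ev b X" and t: "1 \<le> t"
    and TB: "inB Ev b (\<lambda>e. X e + t * ind A e)"
    and Ya: "acceptable Ev b C (\<lambda>e. X e + t * (ind A e - ind Cs e))"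
    and CE: "Cs \<subseteq> Ev" and dis: "A \<inter> Cs = {}"
    and ni: "\<forall>c\<in>Cs. \<not> interesting Ev b C (\<lambda>e. X e + t * (ind A e - ind Cs e)) c"
  shows "C (\<lambda>e. X e + t * ind A e) = (\<lambda>e. X e + t * (ind A e - ind Cs e))"
proof -
  define T where "T = (\<lambda>e. X e + t * ind A e)"
  define Y where "Y = (\<lambda>e. X e + t * (ind A e - ind Cs e))"
  have TB': "inB Ev b T" using TB T_def by simp
  have YB: "inB Ev b Y" and CY: "C Y = Y" using Ya Y_def unfolding acceptable_def by auto
  have YT: "Y \<le> T" unfolding le_fun_def T_def Y_def ind_def using t by auto
  have le: "C T \<le> Y" unfolding le_fun_def
  proof
    fix e
    show "C T e \<le> Y e"
    proof (cases "e \<in> Cs")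
      case True
      then have eA: "e \<notin> A" using dis by blast
      show ?thesis
      proof (rule ccontr)
        assume gt: "\<not> C T e \<le> Y e"
        define p where "p = Y(e := T e)"
        have pB: "inB Ev b p" unfolding p_def
          using inB_upd[OF YB, of e "T e"] CE True inB_nn[OF TB'] inB_ub[OF TB'] by auto
        have pT: "p \<le> T" using YT unfolding p_def le_fun_def by auto
        have "min (C T e) (p e) \<le> C p e" using A2[OF TB' pB pT] .
        moreover have "C T e \<le> p e" using C_lep[OF TB'] p_def by simp
        ultimately have "C p e > Y e" using gt by simp
        moreover have "p e > Y e" using True eA t unfolding p_def T_def Y_def ind_def by simp
        ultimately have "interesting Ev b C Y e"
          unfolding interesting_def using pB CE True p_def by auto
        then show False using ni True Y_def by simp
      qed
    next
      case False
      then show ?thesis using C_lep[OF TB', of e] unfolding T_def Y_def ind_def by auto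
    qed
  qed
  have "vnorm Ev (C Y) \<le> vnorm Ev (C T)" using A3[OF TB' YB YT] .
  then have "C T = Y" using vn_eq[OF C_inB[OF TB'] YB le] CY by simp
  then show ?thesis using T_def Y_def by simp
qed

lemma cinterest:
  assumes Za: "acceptable Ev b C Z" and AE: "A \<subseteq> Ev"
    and niA: "\<forall>a\<in>A. \<not> interesting Ev b C Z a"
    and c: "c \<in> Cs" "c \<in> Ev" "c \<notin> A" and t: "1 \<le> t"
    and YB: "inB Ev b (\<lambda>e. Z e + t * (ind A e - ind Cs e))"
    and BB: "inB Ev b (\<lambda>e. Z e + t * ind A e)"
  shows "interesting Ev b C (\<lambda>e. Z e + t * (ind A e - ind Cs e)) c"
proof -
  define Y where "Y = (\<lambda>e. Z e + t * (ind A e - ind Cs e))"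
  define big where "big = (\<lambda>e. Z e + t * ind A e)"
  have ZB: "inB Ev b Z" using Za unfolding acceptable_def by auto
  have YB': "inB Ev b Y" using YB Y_def by simp
  have bigB: "inB Ev b big" using BB big_def by simp
  have Cbig: "C big = Z" unfolding big_def
  proof (rule addni[OF Za])
    show "\<And>e. 0 \<le> t * ind A e" using t by (simp add: ind_def)
    show "\<And>e. t * ind A e \<noteq> 0 \<Longrightarrow> e \<in> Ev \<and> \<not> interesting Ev b C Z e"
      using niA AE by (auto simp: ind_def split: if_splits)
    show "inB Ev b (\<lambda>e. Z e + t * ind A e)" using BB .
  qed
  define p where "p = Y(c := Z c)"
  have pB: "inB Ev b p" unfolding p_def
    using inB_upd[OF YB', of c "Z c"] c inB_nn[OF ZB] inB_ub[OF ZB] by auto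
  have pbig: "p \<le> big" unfolding le_fun_def p_def Y_def big_def ind_def using t by auto
  have "min (C big c) (p c) \<le> C p c" using A2[OF bigB pB pbig] .
  then have "C p c \<ge> Z c" using Cbig p_def by simp
  moreover have "Y c < Z c" using c t unfolding Y_def ind_def by simp
  ultimately show ?thesis unfolding interesting_def Y_def[symmetric]
    using c pB p_def by (intro conjI exI[of _ p]) auto
qed


lemma wsideacc:
  assumes Za: "acceptable Ev b C Z"
    and Cs: "Cs = cs ` J" and A: "A = as ` J" and AD: "A \<subseteq> D" and DE: "D \<subseteq> Ev" and CE: "Cs \<subseteq> Ev"
    and dis: "A \<inter> Cs = {}"
    and uacc: "\<forall>j\<in>J. acceptable Ev b C (\<lambda>e. Z e + unitv (as j) e - unitv (cs j) e)"
    and ess: "\<forall>j\<in>J. \<forall>d\<in>D - {as j}. \<not> interesting Ev b C (\<lambda>e. Z e + unitv (as j) e - unitv (cs j) e) d"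
    and YB: "inB Ev b (\<lambda>e. Z e + ind A e - ind Cs e)"
  shows "C (\<lambda>e. Z e + ind A e - ind Cs e) = (\<lambda>e. Z e + ind A e - ind Cs e)"
proof -
  define Y where "Y = (\<lambda>e. Z e + ind A e - ind Cs e)"
  have ZB: "inB Ev b Z" and CZ: "C Z = Z" using Za unfolding acceptable_def by auto
  have YB': "inB Ev b Y" using YB Y_def by simp
  show ?thesis
  proof (cases "J = {}")
    case True
    then have "A = {}" "Cs = {}" using A Cs by auto
    then show ?thesis using CZ by (simp add: ind_def)
  next
    case False
    then obtain j0 where j0: "j0 \<in> J" by blast
    have key: "min (Z e + unitv (as j) e - unitv (cs j) e) (Y e) \<le> C Y e" if j: "j \<in> J" for j e
    proof -
      define u where "u = (\<lambda>e. Z e + unitv (as j) e - unitv (cs j) e)"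
      have ua: "acceptable Ev b C u" using uacc j u_def by simp
      have asj: "as j \<in> A" and csj: "cs j \<in> Cs" using A Cs j by auto
      have ne: "as j \<noteq> cs j" using asj csj dis by (metis IntI empty_iff)
      have Teq: "(\<lambda>e. u e + ind (A - {as j}) e) = (\<lambda>e. Y e + ind (Cs - {cs j}) e)"
        using ne asj csj dis unfolding u_def Y_def ind_def unitv_def by (auto simp: fun_eq_iff)
      have TB: "inB Ev b (\<lambda>e. u e + ind (A - {as j}) e)"
        unfolding Teq
      proof (rule inB_I)
        fix e
        show "0 \<le> Y e + ind (Cs - {cs j}) e" using inB_nn[OF YB', of e] by (simp add: ind_def)
        show "Y e + ind (Cs - {cs j}) e \<le> int (b e)"
          using inB_ub[OF YB', of e] inB_ub[OF ZB, of e] dis unfolding Y_def ind_def by auto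
        assume "e \<notin> Ev" then show "Y e + ind (Cs - {cs j}) e = 0"
          using inB_out[OF YB'] CE unfolding ind_def by auto
      qed
      have CT: "C (\<lambda>e. u e + ind (A - {as j}) e) = u"
      proof (rule addni[OF ua])
        show "\<And>e. 0 \<le> ind (A - {as j}) e" by (simp add: ind_def)
        show "\<And>e. ind (A - {as j}) e \<noteq> 0 \<Longrightarrow> e \<in> Ev \<and> \<not> interesting Ev b C u e"
          using ess j AD DE unfolding u_def ind_def by (auto split: if_splits)
        show "inB Ev b (\<lambda>e. u e + ind (A - {as j}) e)" using TB .
      qed
      have YT: "Y \<le> (\<lambda>e. u e + ind (A - {as j}) e)"
      proof -
        have "Y \<le> (\<lambda>e. Y e + ind (Cs - {cs j}) e)" by (auto simp: le_fun_def ind_def)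
        then show ?thesis using Teq by simp
      qed
      have "min (C (\<lambda>e. u e + ind (A - {as j}) e) e) (Y e) \<le> C Y e" using A2[OF TB YB' YT] .
      then show ?thesis using CT u_def by simp
    qed
    have "Y \<le> C Y" unfolding le_fun_def
    proof
      fix e
      show "Y e \<le> C Y e"
      proof (cases "e \<in> A")
        case True
        then obtain j where j: "j \<in> J" "e = as j" using A by blast
        have "e \<noteq> cs j" using True dis Cs j by blast
        then have "Z e + unitv (as j) e - unitv (cs j) e = Y e"
          using True dis j unfolding Y_def ind_def unitv_def by auto
        then show ?thesis using key[OF j(1), of e] by simp
      next
        case nA: False
        show ?thesis
        proof (cases "e \<in> Cs")
          case True
          then obtain j where j: "j \<in> J" "e = cs j" using Cs by blast
          have "e \<noteq> as j" using True dis A j by blast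
          then have "Z e + unitv (as j) e - unitv (cs j) e = Y e"
            using True nA j unfolding Y_def ind_def unitv_def by auto
          then show ?thesis using key[OF j(1), of e] by simp
        next
          case False
          have "e \<noteq> as j0" "e \<noteq> cs j0" using nA False A Cs j0 by auto
          then have "Z e + unitv (as j0) e - unitv (cs j0) e = Y e"
            using False nA unfolding Y_def ind_def unitv_def by auto
          then show ?thesis using key[OF j0, of e] by simp
        qed
      qed
    qed
    then have "C Y = Y" using C_le[OF YB'] by (simp add: antisym)
    then show ?thesis using Y_def by simp
  qed
qed


lemma wsideni:
  assumes Za: "acceptable Ev b C Z"
    and Cs: "Cs = cs ` J" and A: "A = as ` J" and AD: "A \<subseteq> D" and DE: "D \<subseteq> Ev" and CE: "Cs \<subseteq> Ev"
    and dis: "D \<inter> Cs = {}" and injc: "inj_on cs J" and inja: "inj_on as J"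
    and ess: "\<forall>j\<in>J. \<forall>d\<in>D - {as j}. \<not> interesting Ev b C (\<lambda>e. Z e + unitv (as j) e - unitv (cs j) e) d"
    and niZ: "\<forall>d\<in>D. \<not> interesting Ev b C Z d"
    and YB: "inB Ev b (\<lambda>e. Z e + ind A e - ind Cs e)"
    and eD: "e \<in> D" and finJ: "finite J"
    and uacc: "\<forall>j\<in>J. acceptable Ev b C (\<lambda>e. Z e + unitv (as j) e - unitv (cs j) e)"
  shows "\<not> interesting Ev b C (\<lambda>e. Z e + ind A e - ind Cs e) e"
proof
  define Y where "Y = (\<lambda>e. Z e + ind A e - ind Cs e)"
  have ZB: "inB Ev b Z" and CZ: "C Z = Z" using Za unfolding acceptable_def by auto
  have YB': "inB Ev b Y" using YB Y_def by simp
  have AE: "A \<subseteq> Ev" using AD DE by blast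
  have eE: "e \<in> Ev" using eD DE by blast
  have eC: "e \<notin> Cs" using eD dis by blast
  have disAC: "\<And>x. x \<in> A \<Longrightarrow> x \<notin> Cs" using AD dis by blast
  assume "interesting Ev b C (\<lambda>e. Z e + ind A e - ind Cs e) e"
  then obtain z' where z'B: "inB Ev b z'" and gt: "z' e > Y e"
    and eq: "\<forall>e'. e' \<noteq> e \<longrightarrow> z' e' = Y e'" and ch: "C z' e > Y e"
    unfolding interesting_def Y_def by blast
  define k where "k = z' e"
  have kb: "k \<le> int (b e)" using inB_ub[OF z'B] k_def by simp
  have kZ: "k > Z e" using gt eC unfolding k_def Y_def ind_def by (auto split: if_splits)
  have YA: "\<And>x. x \<in> A \<Longrightarrow> Y x = Z x + 1" using disAC unfolding Y_def ind_def by simp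
  have YC: "\<And>x. x \<in> Cs \<Longrightarrow> Y x = Z x - 1" using disAC unfolding Y_def ind_def by auto
  have YO: "\<And>x. x \<notin> A \<Longrightarrow> x \<notin> Cs \<Longrightarrow> Y x = Z x" unfolding Y_def ind_def by simp
  define big where "big = (\<lambda>x. if x = e then k else Z x + ind A x)"
  have bigB: "inB Ev b big"
  proof (rule inB_I)
    fix x
    show "0 \<le> big x" using inB_nn[OF ZB, of x] kZ inB_nn[OF ZB, of e] unfolding big_def ind_def by auto
    show "big x \<le> int (b x)"
    proof (cases "x = e")
      case True then show ?thesis using kb big_def by simp
    next
      case False
      then show ?thesis using inB_ub[OF YB', of x] inB_ub[OF ZB, of x] YA[of x]
        unfolding big_def ind_def by (auto split: if_splits)
    qed
    assume "x \<notin> Ev" then show "big x = 0" using inB_out[OF ZB] AE eE unfolding big_def ind_def by auto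
  qed
  have Cbig: "C big = Z"
  proof -
    have "C (\<lambda>x. Z x + (big x - Z x)) = Z"
    proof (rule addni[OF Za])
      show "\<And>x. 0 \<le> big x - Z x" using kZ unfolding big_def ind_def by auto
      show "\<And>x. big x - Z x \<noteq> 0 \<Longrightarrow> x \<in> Ev \<and> \<not> interesting Ev b C Z x"
        using niZ AD DE eD unfolding big_def ind_def by (auto split: if_splits)
      show "inB Ev b (\<lambda>x. Z x + (big x - Z x))" using bigB by simp
    qed
    then show ?thesis by simp
  qed
  have z'big: "z' \<le> big" unfolding le_fun_def
  proof
    fix x show "z' x \<le> big x"
      using eq YA[of x] YC[of x] YO[of x] k_def unfolding big_def ind_def
      by (cases "x = e"; cases "x \<in> Cs") auto
  qed
  have up: "vnorm Ev (C z') \<le> vnorm Ev Z" using A3[OF bigB z'B z'big] Cbig by simp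
  have lowZ: "min (Z x) (z' x) \<le> C z' x" for x using A2[OF bigB z'B z'big, of x] Cbig by simp
  have lowj: "min (Z x + unitv (as j) x - unitv (cs j) x) (z' x) \<le> C z' x" if j: "j \<in> J" "as j \<noteq> e" for j x
  proof -
    define u where "u = (\<lambda>e. Z e + unitv (as j) e - unitv (cs j) e)"
    have ua: "acceptable Ev b C u" using uacc j u_def by simp
    have asj: "as j \<in> A" and csj: "cs j \<in> Cs" using A Cs j by auto
    have ne: "as j \<noteq> cs j" using asj csj disAC by metis
    have ecs: "e \<noteq> cs j" using eC csj by metis
    have ue: "u e = Z e" using j(2) ecs unfolding u_def unitv_def by simp
    define T where "T = (\<lambda>x. if x = e then k else u x + ind (A - {as j}) x)"
    have Tx: "\<And>x. x \<noteq> e \<Longrightarrow> T x = Y x + ind (Cs - {cs j}) x"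
      using ne disAC asj csj unfolding T_def u_def Y_def ind_def unitv_def by auto
    have TB: "inB Ev b T"
    proof (rule inB_I)
      fix x
      show "0 \<le> T x"
      proof (cases "x = e")
        case True then show ?thesis using kZ inB_nn[OF ZB, of e] T_def by simp
      next
        case False then show ?thesis using Tx inB_nn[OF YB', of x] by (simp add: ind_def)
      qed
      show "T x \<le> int (b x)"
      proof (cases "x = e")
        case True then show ?thesis using kb T_def by simp
      next
        case False then show ?thesis using Tx[OF False] inB_ub[OF YB', of x] inB_ub[OF ZB, of x] YC[of x]
          unfolding ind_def by auto
      qed
      assume xE: "x \<notin> Ev"
      then have "x \<noteq> e" "x \<notin> Cs" using CE eE by auto
      then show "T x = 0" using Tx[of x] inB_out[OF YB' xE] unfolding ind_def by auto
    qed
    have CT: "C T = u"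
    proof -
      have "C (\<lambda>x. u x + (T x - u x)) = u"
      proof (rule addni[OF ua])
        show "\<And>x. 0 \<le> T x - u x" using kZ ue unfolding T_def ind_def by auto
        show "\<And>x. T x - u x \<noteq> 0 \<Longrightarrow> x \<in> Ev \<and> \<not> interesting Ev b C u x"
          using ess j AD DE eD unfolding T_def ind_def u_def by (auto split: if_splits)
        show "inB Ev b (\<lambda>x. u x + (T x - u x))" using TB by simp
      qed
      then show ?thesis by simp
    qed
    have z'T: "z' \<le> T" unfolding le_fun_def
    proof
      fix x show "z' x \<le> T x"
        using eq Tx[of x] k_def unfolding T_def ind_def by (cases "x = e") auto
    qed
    show ?thesis using A2[OF TB z'B z'T, of x] CT u_def by simp
  qed
  have YleC: "Y \<le> C z'" unfolding le_fun_def
  proof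
    fix x
    show "Y x \<le> C z' x"
    proof (cases "x = e")
      case True then show ?thesis using ch by simp
    next
      case xe: False
      then have z'x: "z' x = Y x" using eq by simp
      show ?thesis
      proof (cases "x \<in> A")
        case True
        then obtain j where j: "j \<in> J" "x = as j" using A by blast
        have "cs j \<noteq> x" using True disAC Cs j by blast
        then have "Z x + unitv (as j) x - unitv (cs j) x = Z x + 1" using j unfolding unitv_def by simp
        then show ?thesis using lowj[OF j(1), of x] j xe z'x YA[OF True] by simp
      next
        case False
        then show ?thesis using lowZ[of x] z'x YC[of x] YO[of x] by (cases "x \<in> Cs") auto
      qed
    qed
  qed
  have "vnorm Ev Y < vnorm Ev (C z')" using vn_less[OF C_inB[OF z'B] YB' YleC eE ch] .
  moreover have "vnorm Ev Y = vnorm Ev Z"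
  proof -
    have "card A = card J" using A inja card_image by blast
    moreover have "card Cs = card J" using Cs injc card_image by blast
    ultimately show ?thesis using vn_comb[OF ZB YB' AE CE] Y_def by simp
  qed
  ultimately show False using up by simp
qed

end


definition evs :: "'a list \<Rightarrow> 'a set" where
  "evs R = {R ! j | j. j < length R \<and> even j}"
definition ods :: "'a list \<Rightarrow> 'a set" where
  "ods R = {R ! j | j. j < length R \<and> odd j}"

lemma evs_ods_dis: "distinct R \<Longrightarrow> evs R \<inter> ods R = {}"
  unfolding evs_def ods_def by (auto simp: nth_eq_iff_index_eq)

lemma chi_eq:
  assumes d: "distinct R"
  shows "chi R e = ind (evs R) e - ind (ods R) e"
proof (cases "e \<in> set R")
  case True
  then obtain k where k: "k < length R" "R ! k = e" by (metis in_set_conv_nth)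
  have iff: "\<And>j. j < length R \<Longrightarrow> (R ! j = e) = (j = k)" using d k by (auto simp: nth_eq_iff_index_eq)
  have "chi R e = (\<Sum>j<length R. if j = k then (if even j then 1 else -1) else 0)"
    unfolding chi_def by (intro sum.cong) (auto simp: iff)
  also have "\<dots> = (if even k then 1 else -1)" using k by simp
  finally have c: "chi R e = (if even k then 1 else -1)" .
  have ev: "e \<in> evs R \<longleftrightarrow> even k" unfolding evs_def using iff k by auto
  have od: "e \<in> ods R \<longleftrightarrow> odd k" unfolding ods_def using iff k by auto
  show ?thesis using c ev od by (simp add: ind_def)
next
  case False
  then have "chi R e = 0" unfolding chi_def by (intro sum.neutral) (auto)
  moreover have "e \<notin> evs R" "e \<notin> ods R" using False unfolding evs_def ods_def by auto
  ultimately show ?thesis by (simp add: ind_def)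
qed

lemma concat2:
  assumes "\<And>i. length (h i) = 2"
  shows "length (concat (map h [0..<n])) = 2 * n \<and>
         (\<forall>i r. i < n \<longrightarrow> r < 2 \<longrightarrow> concat (map h [0..<n]) ! (2 * i + r) = h i ! r)"
proof (induction n)
  case 0 then show ?case by simp
next
  case (Suc n)
  have L: "length (concat (map h [0..<n])) = 2 * n" using Suc by blast
  show ?case
  proof
    show "length (concat (map h [0..<Suc n])) = 2 * Suc n" using L assms by simp
    show "\<forall>i r. i < Suc n \<longrightarrow> r < 2 \<longrightarrow> concat (map h [0..<Suc n]) ! (2 * i + r) = h i ! r"
    proof (intro allI impI)
      fix i r assume i: "i < Suc n" and r: "r < (2::nat)"
      show "concat (map h [0..<Suc n]) ! (2 * i + r) = h i ! r"
      proof (cases "i < n")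
        case True
        then show ?thesis using Suc L r by (simp add: nth_append)
      next
        case False
        then have "i = n" using i by simp
        then show ?thesis using L r by (simp add: nth_append)
      qed
    qed
  qed
qed

lemma cv_len: "length (cycle_verts R) = 2 * length R"
  unfolding cycle_verts_def using concat2[of "\<lambda>j. if even j then [(R ! j, True), (R ! j, False)]
                                   else [(R ! j, False), (R ! j, True)]" "length R"] by simp

lemma cv_nth:
  assumes "j < length R"
  shows "cycle_verts R ! (2 * j) = (R ! j, even j)" "cycle_verts R ! (2 * j + 1) = (R ! j, odd j)"
proof -
  let ?h = "\<lambda>j. if even j then [(R ! j, True), (R ! j, False)] else [(R ! j, False), (R ! j, True)]"
  have H: "\<And>i r. i < length R \<Longrightarrow> r < 2 \<Longrightarrow> concat (map ?h [0..<length R]) ! (2 * i + r) = ?h i ! r"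
    using concat2[of ?h "length R"] by simp
  show "cycle_verts R ! (2 * j) = (R ! j, even j)"
    using H[OF assms, of 0] unfolding cycle_verts_def by simp
  show "cycle_verts R ! (2 * j + 1) = (R ! j, odd j)"
    using H[OF assms, of 1] unfolding cycle_verts_def by simp
qed

lemma darcs_TF: "((a, True), (a', False)) \<in> darcs E b Cw Cf x \<Longrightarrow> a' = a \<and> a \<in> Uplus E b Cf x"
  unfolding darcs_def by auto
lemma darcs_FT: "((a, False), (a', True)) \<in> darcs E b Cw Cf x \<Longrightarrow> a' = a \<and> a \<in> Uminus E b Cf x"
  unfolding darcs_def by auto
lemma darcs_FF: "((a, False), (c, False)) \<in> darcs E b Cw Cf x \<Longrightarrow> legal_fpair E b Cf x a c"
  unfolding darcs_def by auto
lemma darcs_TT: "((c, True), (a, True)) \<in> darcs E b Cw Cf x \<Longrightarrow> essential_wpair E b Cw Cf x c a"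
  unfolding darcs_def by auto

lemma rot_struct:
  assumes rot: "rotation W F E b Cw Cf x R"
  shows "stable W F E b Cw Cf x" "R \<noteq> []" "even (length R)" "distinct R"
    "\<And>j. j < length R \<Longrightarrow> even j \<Longrightarrow> R ! j \<in> Uplus E b Cf x"
    "\<And>j. j < length R \<Longrightarrow> odd j \<Longrightarrow> R ! j \<in> Uminus E b Cf x"
    "\<And>j. j < length R \<Longrightarrow> even j \<Longrightarrow> legal_fpair E b Cf x (R ! j) (R ! Suc j)"
    "\<And>j. j < length R \<Longrightarrow> odd j \<Longrightarrow> essential_wpair E b Cw Cf x (R ! j) (R ! (Suc j mod length R))"
proof -
  let ?n = "length R"
  let ?vs = "cycle_verts R"
  show st: "stable W F E b Cw Cf x" and ne: "R \<noteq> []" and ev: "even ?n" and d: "distinct R"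
    using rot unfolding rotation_def by auto
  have arcs: "\<And>i. i < 2 * ?n \<Longrightarrow> (?vs ! i, ?vs ! ((i + 1) mod (2 * ?n))) \<in> darcs E b Cw Cf x"
    using rot cv_len[of R] unfolding rotation_def Let_def by auto
  show "R ! j \<in> Uplus E b Cf x" if "j < ?n" "even j" for j
  proof -
    have "(?vs ! (2 * j), ?vs ! ((2 * j + 1) mod (2 * ?n))) \<in> darcs E b Cw Cf x" by (rule arcs) (use that in simp)
    moreover have "(2 * j + 1) mod (2 * ?n) = 2 * j + 1" using that by simp
    ultimately show ?thesis using cv_nth[OF that(1)] that darcs_TF by fastforce
  qed
  show "R ! j \<in> Uminus E b Cf x" if "j < ?n" "odd j" for j
  proof -
    have "(?vs ! (2 * j), ?vs ! ((2 * j + 1) mod (2 * ?n))) \<in> darcs E b Cw Cf x" by (rule arcs) (use that in simp)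
    moreover have "(2 * j + 1) mod (2 * ?n) = 2 * j + 1" using that by simp
    ultimately show ?thesis using cv_nth[OF that(1)] that darcs_FT by fastforce
  qed
  show "legal_fpair E b Cf x (R ! j) (R ! Suc j)" if "j < ?n" "even j" for j
  proof -
    have sj: "Suc j < ?n" using that ev by (metis Suc_lessI even_Suc)
    have "(?vs ! (2 * j + 1), ?vs ! ((2 * j + 1 + 1) mod (2 * ?n))) \<in> darcs E b Cw Cf x" by (rule arcs) (use that in simp)
    moreover have "(2 * j + 1 + 1) mod (2 * ?n) = 2 * Suc j" using sj by simp
    ultimately show ?thesis using cv_nth(1)[OF sj] cv_nth(2)[OF that(1)] that darcs_FF by fastforce
  qed
  show "essential_wpair E b Cw Cf x (R ! j) (R ! (Suc j mod ?n))" if "j < ?n" "odd j" for j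
  proof -
    have sj: "Suc j mod ?n < ?n" using that by (metis mod_less_divisor gr_zeroI not_less0)
    have evs: "even (Suc j mod ?n)"
    proof (cases "Suc j = ?n")
      case True then show ?thesis by simp
    next
      case False then have "Suc j < ?n" using that by simp
      then show ?thesis using that by simp
    qed
    have "(?vs ! (2 * j + 1), ?vs ! ((2 * j + 1 + 1) mod (2 * ?n))) \<in> darcs E b Cw Cf x" by (rule arcs) (use that in simp)
    moreover have "(2 * j + 1 + 1) mod (2 * ?n) = 2 * (Suc j mod ?n)"
      by (simp add: mult_mod_right)
    ultimately show ?thesis using cv_nth(1)[OF sj] cv_nth(2)[OF that(1)] that evs darcs_TT by fastforce
  qed
qed



lemma inB_intro:
  assumes "\<And>e. e \<in> Ev \<Longrightarrow> 0 \<le> z e" "\<And>e. e \<in> Ev \<Longrightarrow> z e \<le> int (b e)" "\<And>e. e \<notin> Ev \<Longrightarrow> z e = 0"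
  shows "inB Ev b z"
  using assms unfolding inB_def by blast

lemma inB_ub_g: "inB Ev b z \<Longrightarrow> z e \<le> int (b e)"
  unfolding inB_def by (cases "e \<in> Ev") auto
lemma inB_nn_g: "inB Ev b z \<Longrightarrow> 0 \<le> z e"
  unfolding inB_def by (cases "e \<in> Ev") auto
lemma inB_out_g: "inB Ev b z \<Longrightarrow> e \<notin> Ev \<Longrightarrow> z e = 0"
  unfolding inB_def by auto

lemma acc_inB: "acceptable Ev b C z \<Longrightarrow> inB Ev b z"
  unfolding acceptable_def by simp

lemma fun_plus_eq: "(f + g) = (\<lambda>e. f e + g e)" "(f + g - h) = (\<lambda>e. f e + g e - h e)"
  by (auto simp: fun_eq_iff)

locale setting =
  fixes W :: "'w set" and F :: "'f set" and E :: "('w \<times> 'f) set"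
    and b :: "'w \<times> 'f \<Rightarrow> nat"
    and Cw :: "'w \<Rightarrow> ('w, 'f) cfun" and Cf :: "'f \<Rightarrow> ('w, 'f) cfun"
  assumes finW: "finite W" and finF: "finite F" and EWF: "E \<subseteq> W \<times> F"
    and cfW: "\<forall>w\<in>W. choice_fun (Ew E w) b (Cw w)"
    and cfF: "\<forall>f\<in>F. choice_fun (Ef E f) b (Cf f)"
begin

lemma finE: "finite E" using finW finF EWF by (meson finite_SigmaI finite_subset)
lemma Ew_sub: "Ew E w \<subseteq> E" unfolding Ew_def by auto
lemma Ef_sub: "Ef E f \<subseteq> E" unfolding Ef_def by auto
lemma cfvW: "w \<in> W \<Longrightarrow> cfv (Ew E w) b (Cw w)"
  using cfW finite_subset[OF Ew_sub finE] by (unfold_locales) auto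
lemma cfvF: "f \<in> F \<Longrightarrow> cfv (Ef E f) b (Cf f)"
  using cfF finite_subset[OF Ef_sub finE] by (unfold_locales) auto
lemma E_W: "e \<in> E \<Longrightarrow> fst e \<in> W" using EWF by auto
lemma E_F: "e \<in> E \<Longrightarrow> snd e \<in> F" using EWF by auto
lemma E_Ew: "e \<in> E \<Longrightarrow> e \<in> Ew E (fst e)" unfolding Ew_def by auto
lemma E_Ef: "e \<in> E \<Longrightarrow> e \<in> Ef E (snd e)" unfolding Ef_def by auto

lemma st_gm: "stable W F E b Cw Cf x \<Longrightarrow> gmatching W F E b Cw Cf x"
  unfolding stable_def by simp
lemma st_accW: "stable W F E b Cw Cf x \<Longrightarrow> w \<in> W \<Longrightarrow> acceptable (Ew E w) b (Cw w) (restr (Ew E w) x)"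
  unfolding stable_def gmatching_def by simp
lemma st_accF: "stable W F E b Cw Cf x \<Longrightarrow> f \<in> F \<Longrightarrow> acceptable (Ef E f) b (Cf f) (restr (Ef E f) x)"
  unfolding stable_def gmatching_def by simp
lemma st_bounds: "stable W F E b Cw Cf x \<Longrightarrow> e \<in> E \<Longrightarrow> 0 \<le> x e \<and> x e \<le> int (b e)"
  unfolding stable_def gmatching_def by simp
lemma st_out: "stable W F E b Cw Cf x \<Longrightarrow> e \<notin> E \<Longrightarrow> x e = 0"
  unfolding stable_def gmatching_def by blast
lemma st_noblock: "stable W F E b Cw Cf x \<Longrightarrow> e \<in> Uplus E b Cf x \<Longrightarrow>
    \<not> interesting (Ew E (fst e)) b (Cw (fst e)) (restr (Ew E (fst e)) x) e"
proof -
  assume "stable W F E b Cw Cf x" "e \<in> Uplus E b Cf x"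
  then have "\<not> blocking E b Cw Cf x e" "e \<in> E"
    "interesting (Ef E (snd e)) b (Cf (snd e)) (restr (Ef E (snd e)) x) e"
    unfolding stable_def Uplus_def by blast+
  then show ?thesis unfolding blocking_def by blast
qed

lemma Uplus_Uminus: "Uplus E b Cf x \<inter> Uminus E b Cf x = {}"
  unfolding Uplus_def Uminus_def by auto

lemma Uplus_lt: "e \<in> Uplus E b Cf x \<Longrightarrow> x e < int (b e)"
proof -
  assume "e \<in> Uplus E b Cf x"
  then have "interesting (Ef E (snd e)) b (Cf (snd e)) (restr (Ef E (snd e)) x) e"
    unfolding Uplus_def by simp
  then obtain z' where "inB (Ef E (snd e)) b z'" "z' e > restr (Ef E (snd e)) x e" "e \<in> Ef E (snd e)"
    unfolding interesting_def by blast
  then have "z' e \<le> int (b e)" "restr (Ef E (snd e)) x e = x e"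
    using inB_ub_g[of "Ef E (snd e)" b z' e] unfolding restr_def by auto
  with \<open>z' e > _\<close> show ?thesis by simp
qed

lemma Uminus_gt: "e \<in> Uminus E b Cf x \<Longrightarrow> x e > 0"
  unfolding Uminus_def by simp

lemma restr_y:
  assumes "distinct R"
  shows "restr Ev (\<lambda>e. x e + int t * chi R e) =
    (\<lambda>e. restr Ev x e + int t * (ind (evs R \<inter> Ev) e - ind (ods R \<inter> Ev) e))"
  using chi_eq[OF assms] by (auto simp: fun_eq_iff restr_def ind_def)

end



locale rotctx = setting +
  fixes x :: "('w, 'f) vec" and R :: "('w \<times> 'f) list"
  assumes rot: "rotation W F E b Cw Cf x R"
begin

abbreviation "nR \<equiv> length R"

lemma xst: "stable W F E b Cw Cf x" and Rne: "R \<noteq> []" and ev: "even nR" and dR: "distinct R"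
  using rot_struct[OF rot] by auto
lemma up: "j < nR \<Longrightarrow> even j \<Longrightarrow> R ! j \<in> Uplus E b Cf x" using rot_struct(5)[OF rot] by blast
lemma um: "j < nR \<Longrightarrow> odd j \<Longrightarrow> R ! j \<in> Uminus E b Cf x" using rot_struct(6)[OF rot] by blast
lemma lf: "j < nR \<Longrightarrow> even j \<Longrightarrow> legal_fpair E b Cf x (R ! j) (R ! Suc j)" using rot_struct(7)[OF rot] by blast
lemma es: "j < nR \<Longrightarrow> odd j \<Longrightarrow> essential_wpair E b Cw Cf x (R ! j) (R ! (Suc j mod nR))"
  using rot_struct(8)[OF rot] by blast

lemma suc_lt: "j < nR \<Longrightarrow> even j \<Longrightarrow> Suc j < nR"
  using ev by (metis Suc_lessI even_Suc)

lemma evs_Up: "evs R \<subseteq> Uplus E b Cf x" unfolding evs_def using up by auto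
lemma ods_Um: "ods R \<subseteq> Uminus E b Cf x" unfolding ods_def using um by auto
lemma evs_E: "evs R \<subseteq> E" using evs_Up unfolding Uplus_def by auto
lemma ods_E: "ods R \<subseteq> E" using ods_Um unfolding Uminus_def by auto
lemma evs_ods: "evs R \<inter> ods R = {}" using evs_ods_dis[OF dR] .

lemma lf_parts:
  assumes "j < nR" "even j"
  shows "snd (R ! Suc j) = snd (R ! j)" "R ! Suc j \<in> E"
    "Cf (snd (R ! j)) (\<lambda>e. restr (Ef E (snd (R ! j))) x e + unitv (R ! j) e)
      = (\<lambda>e. restr (Ef E (snd (R ! j))) x e + unitv (R ! j) e - unitv (R ! Suc j) e)"
proof -
  have L: "legal_fpair E b Cf x (R ! j) (R ! Suc j)" using lf[OF assms] .
  show "snd (R ! Suc j) = snd (R ! j)" "R ! Suc j \<in> E"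
    using L unfolding legal_fpair_def Let_def Ef_def by auto
  show "Cf (snd (R ! j)) (\<lambda>e. restr (Ef E (snd (R ! j))) x e + unitv (R ! j) e)
      = (\<lambda>e. restr (Ef E (snd (R ! j))) x e + unitv (R ! j) e - unitv (R ! Suc j) e)"
    using L unfolding legal_fpair_def Let_def by (simp add: plus_fun_def fun_diff_def)
qed

lemma es_parts:
  assumes "j < nR" "odd j"
  shows "fst (R ! (Suc j mod nR)) = fst (R ! j)" "R ! j \<in> E"
    "acceptable (Ew E (fst (R ! j))) b (Cw (fst (R ! j)))
       (\<lambda>e. restr (Ew E (fst (R ! j))) x e + unitv (R ! (Suc j mod nR)) e - unitv (R ! j) e)"
    "\<forall>d\<in>(Uplus E b Cf x \<inter> Ew E (fst (R ! j))) - {R ! (Suc j mod nR)}.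
       \<not> interesting (Ew E (fst (R ! j))) b (Cw (fst (R ! j)))
          (\<lambda>e. restr (Ew E (fst (R ! j))) x e + unitv (R ! (Suc j mod nR)) e - unitv (R ! j) e) d"
proof -
  have L: "legal_wpair E b Cw Cf x (R ! j) (R ! (Suc j mod nR))"
    and N: "\<not> (\<exists>d \<in> (Uplus E b Cf x \<inter> Ew E (fst (R ! j))) - {R ! (Suc j mod nR)}.
            interesting (Ew E (fst (R ! j))) b (Cw (fst (R ! j)))
              (restr (Ew E (fst (R ! j))) x + unitv (R ! (Suc j mod nR)) - unitv (R ! j)) d)"
    using es[OF assms] unfolding essential_wpair_def Let_def by auto
  show "fst (R ! (Suc j mod nR)) = fst (R ! j)" "R ! j \<in> E"
    using L unfolding legal_wpair_def Let_def Ew_def by auto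
  show "acceptable (Ew E (fst (R ! j))) b (Cw (fst (R ! j)))
       (\<lambda>e. restr (Ew E (fst (R ! j))) x e + unitv (R ! (Suc j mod nR)) e - unitv (R ! j) e)"
    using L unfolding legal_wpair_def Let_def by (simp add: plus_fun_def fun_diff_def)
  show "\<forall>d\<in>(Uplus E b Cf x \<inter> Ew E (fst (R ! j))) - {R ! (Suc j mod nR)}.
       \<not> interesting (Ew E (fst (R ! j))) b (Cw (fst (R ! j)))
          (\<lambda>e. restr (Ew E (fst (R ! j))) x e + unitv (R ! (Suc j mod nR)) e - unitv (R ! j) e) d"
    using N by (simp add: plus_fun_def fun_diff_def)
qed

definition Jf :: "'f \<Rightarrow> nat set" where "Jf f = {j. j < nR \<and> odd j \<and> R ! j \<in> Ef E f}"

lemma Jf_fin: "finite (Jf f)" unfolding Jf_def by simp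

lemma f_C: "ods R \<inter> Ef E f = (nth R) ` Jf f"
  unfolding ods_def Jf_def by auto

lemma f_A: "evs R \<inter> Ef E f = (\<lambda>j. R ! (j - 1)) ` Jf f"
proof
  show "evs R \<inter> Ef E f \<subseteq> (\<lambda>j. R ! (j - 1)) ` Jf f"
  proof
    fix e assume "e \<in> evs R \<inter> Ef E f"
    then obtain i where i: "i < nR" "even i" "e = R ! i" "e \<in> Ef E f" unfolding evs_def by auto
    have "Suc i < nR" using suc_lt i by simp
    moreover have "R ! Suc i \<in> Ef E f" using lf_parts(1,2)[OF i(1,2)] i(3,4) unfolding Ef_def by auto
    ultimately have "Suc i \<in> Jf f" using i unfolding Jf_def by simp
    then show "e \<in> (\<lambda>j. R ! (j - 1)) ` Jf f" using i by force
  qed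
next
  show "(\<lambda>j. R ! (j - 1)) ` Jf f \<subseteq> evs R \<inter> Ef E f"
  proof
    fix e assume "e \<in> (\<lambda>j. R ! (j - 1)) ` Jf f"
    then obtain j where j: "j < nR" "odd j" "R ! j \<in> Ef E f" "e = R ! (j - 1)" unfolding Jf_def by auto
    define i where "i = j - 1"
    have i: "i < nR" "even i" "Suc i = j" using j i_def by (auto elim: oddE)
    have "snd (R ! j) = snd (R ! i)" using lf_parts(1)[OF i(1,2)] i(3) by simp
    moreover have "R ! i \<in> E" using evs_E i unfolding evs_def by auto
    ultimately have "R ! i \<in> Ef E f" using j(3) unfolding Ef_def by auto
    then show "e \<in> evs R \<inter> Ef E f" using i j(4) i_def unfolding evs_def by auto
  qed
qed

lemma f_card: "card (evs R \<inter> Ef E f) = card (ods R \<inter> Ef E f)"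
proof -
  have inj1: "inj_on (nth R) (Jf f)" using dR unfolding Jf_def by (intro inj_on_nth) auto
  have inj2: "inj_on (\<lambda>j. R ! (j - 1)) (Jf f)"
  proof (rule inj_onI)
    fix j k assume jk: "j \<in> Jf f" "k \<in> Jf f" "R ! (j - 1) = R ! (k - 1)"
    then have "j - 1 = k - 1" using dR unfolding Jf_def by (auto simp: nth_eq_iff_index_eq)
    moreover have "j \<ge> 1" "k \<ge> 1" using jk unfolding Jf_def by (auto elim: oddE)
    ultimately show "j = k" by simp
  qed
  show ?thesis unfolding f_A f_C using card_image[OF inj1] card_image[OF inj2] by simp
qed

lemma f_pair:
  assumes c: "c \<in> ods R \<inter> Ef E f"
  shows "\<exists>a\<in>evs R \<inter> Ef E f. Cf f (\<lambda>e. restr (Ef E f) x e + unitv a e)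
          = (\<lambda>e. restr (Ef E f) x e + unitv a e - unitv c e)"
proof -
  obtain j where j: "j \<in> Jf f" "c = R ! j" using c f_C by auto
  have jj: "j < nR" "odd j" "R ! j \<in> Ef E f" using j unfolding Jf_def by auto
  define i where "i = j - 1"
  have i: "i < nR" "even i" "Suc i = j" using jj i_def by (auto elim: oddE)
  have a: "R ! i \<in> evs R \<inter> Ef E f" using f_A j(1) i_def by auto
  have f: "snd (R ! i) = f" using a unfolding Ef_def by auto
  show ?thesis using lf_parts(3)[OF i(1,2)] a f i(3) j(2) by (intro bexI[of _ "R ! i"]) auto
qed


definition Jw :: "'w \<Rightarrow> nat set" where "Jw w = {j. j < nR \<and> odd j \<and> R ! j \<in> Ew E w}"
definition asf :: "nat \<Rightarrow> 'w \<times> 'f" where "asf j = R ! (Suc j mod nR)"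

lemma Jw_fin: "finite (Jw w)" unfolding Jw_def by simp

lemma w_C: "ods R \<inter> Ew E w = (nth R) ` Jw w"
  unfolding ods_def Jw_def by auto

lemma nR_pos: "0 < nR" using Rne by simp

lemma sucmod_lt: "Suc j mod nR < nR" using nR_pos by simp

lemma sucmod_eq: "j < nR \<Longrightarrow> Suc j mod nR = (if Suc j = nR then 0 else Suc j)"
proof (cases "Suc j = nR")
  case False
  assume "j < nR" then have "Suc j < nR" using False by simp
  then show ?thesis using False by simp
qed simp

lemma sucmod_even: "j < nR \<Longrightarrow> odd j \<Longrightarrow> even (Suc j mod nR)"
proof (cases "Suc j = nR")
  case True then show ?thesis by simp
next
  case False
  assume "j < nR" "odd j"
  then have "Suc j < nR" using False by simp
  then show ?thesis using \<open>odd j\<close> by simp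
qed

lemma w_A: "evs R \<inter> Ew E w = asf ` Jw w"
proof
  show "evs R \<inter> Ew E w \<subseteq> asf ` Jw w"
  proof
    fix e assume "e \<in> evs R \<inter> Ew E w"
    then obtain i where i: "i < nR" "even i" "e = R ! i" "e \<in> Ew E w" unfolding evs_def by auto
    define j where "j = (if i = 0 then nR - 1 else i - 1)"
    have j: "j < nR" "odd j" "Suc j mod nR = i"
    proof -
      show "j < nR" using i nR_pos j_def by auto
      show "odd j" using i ev nR_pos j_def by (auto elim: evenE oddE)
      show "Suc j mod nR = i" using i nR_pos j_def by auto
    qed
    have "fst (R ! j) = w" using es_parts(1)[OF j(1,2)] j(3) i(3,4) unfolding Ew_def by auto
    moreover have "R ! j \<in> E" using es_parts(2)[OF j(1,2)] .
    ultimately have "j \<in> Jw w" using j unfolding Jw_def Ew_def by auto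
    then show "e \<in> asf ` Jw w" using j(3) i(3) unfolding asf_def by force
  qed
next
  show "asf ` Jw w \<subseteq> evs R \<inter> Ew E w"
  proof
    fix e assume "e \<in> asf ` Jw w"
    then obtain j where j: "j < nR" "odd j" "R ! j \<in> Ew E w" "e = R ! (Suc j mod nR)"
      unfolding Jw_def asf_def by auto
    have "e \<in> evs R" unfolding evs_def using j sucmod_lt sucmod_even by auto
    moreover have "e \<in> Ew E w" using es_parts(1)[OF j(1,2)] j evs_E \<open>e \<in> evs R\<close> unfolding Ew_def by auto
    ultimately show "e \<in> evs R \<inter> Ew E w" by simp
  qed
qed

lemma w_injc: "inj_on (nth R) (Jw w)" using dR unfolding Jw_def by (intro inj_on_nth) auto

lemma w_inja: "inj_on asf (Jw w)"
proof (rule inj_onI)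
  fix j k assume jk: "j \<in> Jw w" "k \<in> Jw w" "asf j = asf k"
  then have "Suc j mod nR = Suc k mod nR"
    using dR sucmod_lt unfolding asf_def by (auto simp: nth_eq_iff_index_eq)
  moreover have "j < nR" "k < nR" using jk unfolding Jw_def by auto
  ultimately show "j = k"
    using sucmod_eq by (auto split: if_splits)
qed

lemma x_bounds: "e \<in> E \<Longrightarrow> 0 \<le> x e \<and> x e \<le> int (b e)" using st_bounds[OF xst] .
lemma x_out: "e \<notin> E \<Longrightarrow> x e = 0" using st_out[OF xst] .
lemma A_lt: "e \<in> evs R \<Longrightarrow> x e + 1 \<le> int (b e)" using Uplus_lt evs_Up by fastforce
lemma C_gt: "e \<in> ods R \<Longrightarrow> 1 \<le> x e" using Uminus_gt ods_Um by fastforce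

lemma vecB:
  assumes "Ev \<subseteq> E"
  shows "inB Ev b (\<lambda>e. restr Ev x e + ind (evs R \<inter> Ev) e)"
    "inB Ev b (\<lambda>e. restr Ev x e + ind (evs R \<inter> Ev) e - ind (ods R \<inter> Ev) e)"
proof -
  have P: "0 \<le> x e \<and> x e \<le> int (b e) \<and> (e \<in> evs R \<longrightarrow> x e + 1 \<le> int (b e) \<and> e \<notin> ods R)
     \<and> (e \<in> ods R \<longrightarrow> 1 \<le> x e)" if "e \<in> Ev" for e
  proof -
    have eE: "e \<in> E" using that assms by blast
    show ?thesis using x_bounds[OF eE] A_lt[of e] C_gt[of e] evs_ods by blast
  qed
  show "inB Ev b (\<lambda>e. restr Ev x e + ind (evs R \<inter> Ev) e)"
  proof (rule inB_intro)
    fix e assume "e \<in> Ev" then show "0 \<le> restr Ev x e + ind (evs R \<inter> Ev) e" "restr Ev x e + ind (evs R \<inter> Ev) e \<le> int (b e)"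
      using P[of e] by (auto simp: restr_def ind_def)
  next
    fix e assume "e \<notin> Ev" then show "restr Ev x e + ind (evs R \<inter> Ev) e = 0" by (simp add: restr_def ind_def)
  qed
  show "inB Ev b (\<lambda>e. restr Ev x e + ind (evs R \<inter> Ev) e - ind (ods R \<inter> Ev) e)"
  proof (rule inB_intro)
    fix e assume "e \<in> Ev" then show "0 \<le> restr Ev x e + ind (evs R \<inter> Ev) e - ind (ods R \<inter> Ev) e"
      "restr Ev x e + ind (evs R \<inter> Ev) e - ind (ods R \<inter> Ev) e \<le> int (b e)"
      using P[of e] by (auto simp: restr_def ind_def)
  next
    fix e assume "e \<notin> Ev" then show "restr Ev x e + ind (evs R \<inter> Ev) e - ind (ods R \<inter> Ev) e = 0"
      by (simp add: restr_def ind_def)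
  qed
qed

lemma f_side:
  assumes f: "f \<in> F"
  shows "Cf f (\<lambda>e. restr (Ef E f) x e + ind (evs R \<inter> Ef E f) e)
       = (\<lambda>e. restr (Ef E f) x e + ind (evs R \<inter> Ef E f) e - ind (ods R \<inter> Ef E f) e)"
    "acceptable (Ef E f) b (Cf f) (\<lambda>e. restr (Ef E f) x e + ind (evs R \<inter> Ef E f) e - ind (ods R \<inter> Ef E f) e)"
proof -
  interpret V: cfv "Ef E f" b "Cf f" using cfvF[OF f] .
  let ?X = "restr (Ef E f) x"
  let ?A = "evs R \<inter> Ef E f" and ?C = "ods R \<inter> Ef E f"
  have TB: "inB (Ef E f) b (\<lambda>e. ?X e + ind ?A e)" and YB: "inB (Ef E f) b (\<lambda>e. ?X e + ind ?A e - ind ?C e)"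
    using vecB[OF Ef_sub] by auto
  show CT: "Cf f (\<lambda>e. ?X e + ind ?A e) = (\<lambda>e. ?X e + ind ?A e - ind ?C e)"
  proof (rule V.fside1)
    show "acceptable (Ef E f) b (Cf f) ?X" using st_accF[OF xst f] .
    show "?A \<subseteq> Ef E f" "?C \<subseteq> Ef E f" by auto
    show "?A \<inter> ?C = {}" using evs_ods by auto
    show "card ?A = card ?C" using f_card .
    show "\<forall>c\<in>?C. \<exists>a\<in>?A. Cf f (\<lambda>e. ?X e + unitv a e) = (\<lambda>e. ?X e + unitv a e - unitv c e)"
      using f_pair by blast
  qed (use TB YB in auto)
  have YT: "(\<lambda>e. ?X e + ind ?A e - ind ?C e) \<le> (\<lambda>e. ?X e + ind ?A e)" by (simp add: le_fun_def ind_def)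
  have "Cf f (\<lambda>e. ?X e + ind ?A e - ind ?C e) = Cf f (\<lambda>e. ?X e + ind ?A e)"
    using V.A1[OF TB YB YT] CT by simp
  then show "acceptable (Ef E f) b (Cf f) (\<lambda>e. ?X e + ind ?A e - ind ?C e)"
    unfolding acceptable_def using YB CT by simp
qed

lemma w_side:
  assumes w: "w \<in> W"
  shows "acceptable (Ew E w) b (Cw w) (\<lambda>e. restr (Ew E w) x e + ind (evs R \<inter> Ew E w) e - ind (ods R \<inter> Ew E w) e)"
    "\<And>e. e \<in> Uplus E b Cf x \<inter> Ew E w \<Longrightarrow>
      \<not> interesting (Ew E w) b (Cw w) (\<lambda>e. restr (Ew E w) x e + ind (evs R \<inter> Ew E w) e - ind (ods R \<inter> Ew E w) e) e"
proof -
  interpret V: cfv "Ew E w" b "Cw w" using cfvW[OF w] .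
  let ?Z = "restr (Ew E w) x"
  let ?A = "evs R \<inter> Ew E w" and ?C = "ods R \<inter> Ew E w"
  let ?D = "Uplus E b Cf x \<inter> Ew E w"
  have YB: "inB (Ew E w) b (\<lambda>e. ?Z e + ind ?A e - ind ?C e)" using vecB[OF Ew_sub] by auto
  have Za: "acceptable (Ew E w) b (Cw w) ?Z" using st_accW[OF xst w] .
  have fstw: "\<And>j. j \<in> Jw w \<Longrightarrow> fst (R ! j) = w" unfolding Jw_def Ew_def by auto
  have uacc: "\<forall>j\<in>Jw w. acceptable (Ew E w) b (Cw w) (\<lambda>e. ?Z e + unitv (asf j) e - unitv (R ! j) e)"
    using es_parts(3) fstw unfolding Jw_def asf_def by fastforce
  have ess: "\<forall>j\<in>Jw w. \<forall>d\<in>?D - {asf j}. \<not> interesting (Ew E w) b (Cw w) (\<lambda>e. ?Z e + unitv (asf j) e - unitv (R ! j) e) d"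
    using es_parts(4) fstw unfolding Jw_def asf_def by fastforce
  have AD: "?A \<subseteq> ?D" using evs_Up by auto
  have dis: "?A \<inter> ?C = {}" using evs_ods by auto
  have disD: "?D \<inter> ?C = {}" using ods_Um Uplus_Uminus by auto
  show "acceptable (Ew E w) b (Cw w) (\<lambda>e. ?Z e + ind ?A e - ind ?C e)"
    unfolding acceptable_def
    using V.wsideacc[OF Za w_C w_A AD _ _ dis uacc ess YB] YB by auto
  show "\<not> interesting (Ew E w) b (Cw w) (\<lambda>e. ?Z e + ind ?A e - ind ?C e) e" if e: "e \<in> ?D" for e
  proof (rule V.wsideni[OF Za w_C w_A AD _ _ disD w_injc w_inja ess _ YB e Jw_fin uacc])
    show "\<forall>d\<in>?D. \<not> interesting (Ew E w) b (Cw w) ?Z d"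
      using st_noblock[OF xst] unfolding Ew_def by auto
  qed auto
qed


lemma inB_T:
  assumes XB: "inB Ev b X" and YB: "inB Ev b (\<lambda>e. X e + t * (ind A e - ind Cs e))" and dis: "A \<inter> Cs = {}"
  shows "inB Ev b (\<lambda>e. X e + t * ind A e)"
proof -
  have eq: "(\<lambda>e. X e + t * ind A e) = (\<lambda>e. if e \<in> A then X e + t * (ind A e - ind Cs e) else X e)"
    using dis by (auto simp: fun_eq_iff ind_def)
  show ?thesis unfolding eq
    using inB_nn_g[OF XB] inB_ub_g[OF XB] inB_out_g[OF XB] inB_nn_g[OF YB] inB_ub_g[OF YB] inB_out_g[OF YB]
    by (intro inB_intro) auto
qed

lemma max_eq:
  assumes "A \<inter> Cs = {}" "0 \<le> t"
  shows "(\<lambda>e. max (X e) (X e + t * (ind A e - ind Cs e))) = (\<lambda>e. X e + t * ind A e)"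
  using assms by (auto simp: fun_eq_iff ind_def)

lemma y_stable: "stable W F E b Cw Cf (\<lambda>e. x e + int 1 * chi R e)"
proof -
  define y where "y = (\<lambda>e. x e + int 1 * chi R e)"
  have yE: "y e = x e + ind (evs R) e - ind (ods R) e" for e using chi_eq[OF dR] y_def by simp
  have ry: "restr Ev y = (\<lambda>e. restr Ev x e + ind (evs R \<inter> Ev) e - ind (ods R \<inter> Ev) e)" for Ev
    using restr_y[OF dR, of Ev x 1] y_def by (simp add: algebra_simps)
  have g1: "\<forall>e. e \<notin> E \<longrightarrow> y e = 0" using yE x_out evs_E ods_E by (auto simp: ind_def)
  have g2: "\<forall>e\<in>E. 0 \<le> y e \<and> y e \<le> int (b e)"
  proof
    fix e assume eE: "e \<in> E"
    show "0 \<le> y e \<and> y e \<le> int (b e)"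
      using yE[of e] x_bounds[OF eE] A_lt[of e] C_gt[of e] evs_ods by (auto simp: ind_def)
  qed
  have g3: "\<forall>w\<in>W. acceptable (Ew E w) b (Cw w) (restr (Ew E w) y)" using w_side(1) ry by simp
  have g4: "\<forall>f\<in>F. acceptable (Ef E f) b (Cf f) (restr (Ef E f) y)" using f_side(2) ry by simp
  have nb: "\<not> blocking E b Cw Cf y e" for e
  proof
    assume bl: "blocking E b Cw Cf y e"
    then have eE: "e \<in> E" and wi: "interesting (Ew E (fst e)) b (Cw (fst e)) (restr (Ew E (fst e)) y) e"
      and fi: "interesting (Ef E (snd e)) b (Cf (snd e)) (restr (Ef E (snd e)) y) e"
      unfolding blocking_def by auto
    define f where "f = snd e"
    have f: "f \<in> F" using E_F[OF eE] f_def by simp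
    interpret V: cfv "Ef E f" b "Cf f" using cfvF[OF f] .
    let ?X = "restr (Ef E f) x"
    let ?A = "evs R \<inter> Ef E f" and ?C = "ods R \<inter> Ef E f"
    have XB: "inB (Ef E f) b ?X" using acc_inB[OF st_accF[OF xst f]] .
    have YB: "inB (Ef E f) b (\<lambda>e. ?X e + ind ?A e - ind ?C e)" using vecB[OF Ef_sub] by auto
    have mx: "(\<lambda>e. max (?X e) (?X e + ind ?A e - ind ?C e)) = (\<lambda>e. ?X e + ind ?A e)"
      using evs_ods by (auto simp: fun_eq_iff ind_def)
    have "interesting (Ef E f) b (Cf f) ?X e"
      using V.pref_int[OF XB YB] mx f_side(1)[OF f] fi ry f_def by simp
    then have eU: "e \<in> Uplus E b Cf x \<inter> Ew E (fst e)" using eE f_def E_Ew unfolding Uplus_def by auto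
    show False using w_side(2)[OF E_W[OF eE] eU] wi ry by simp
  qed
  have "stable W F E b Cw Cf y"
    unfolding stable_def gmatching_def using g1 g2 g3 g4 nb by blast
  then show ?thesis using y_def by simp
qed

lemma two_le: "2 \<le> nR" using Rne ev by (metis One_nat_def Suc_1 Suc_leI even_Suc length_greater_0_conv le_antisym less_Suc_eq not_less odd_one)

lemma tau_ge1: "1 \<le> tau W F E b Cw Cf x R"
proof -
  let ?P = "\<lambda>lam::nat. \<forall>i\<in>{1..lam}. stable W F E b Cw Cf (\<lambda>e. x e + int i * chi R e)"
  have P1: "?P 1" using y_stable by simp
  define c where "c = R ! 1"
  have c: "c \<in> ods R" unfolding c_def ods_def using two_le by (auto intro!: exI[of _ 1])
  have cE: "c \<in> E" using c ods_E by auto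
  have chic: "chi R c = -1" using chi_eq[OF dR, of c] c evs_ods by (auto simp: ind_def)
  have bnd: "lam \<le> nat (x c)" if "?P lam" for lam
  proof (cases "lam = 0")
    case False
    then have "stable W F E b Cw Cf (\<lambda>e. x e + int lam * chi R e)" using that by auto
    then have "0 \<le> x c + int lam * chi R c" using st_bounds[OF _ cE] by blast
    then show ?thesis using chic by simp
  qed simp
  show ?thesis unfolding tau_def using Greatest_le_nat[of ?P 1 "nat (x c)"] P1 bnd by blast
qed

lemma mono:
  assumes t: "1 \<le> t" and yst: "stable W F E b Cw Cf (\<lambda>e. x e + int t * chi R e)"
  shows "Uplus E b Cf (\<lambda>e. x e + int t * chi R e) \<subseteq> Uplus E b Cf x"
proof
  define y where "y = (\<lambda>e. x e + int t * chi R e)"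
  have ry: "restr Ev y = (\<lambda>e. restr Ev x e + int t * (ind (evs R \<inter> Ev) e - ind (ods R \<inter> Ev) e))" for Ev
    using restr_y[OF dR, of Ev x t] y_def by simp
  have yst': "stable W F E b Cw Cf y" using yst y_def by simp
  fix e assume "e \<in> Uplus E b Cf (\<lambda>e. x e + int t * chi R e)"
  then have eE: "e \<in> E" and fi: "interesting (Ef E (snd e)) b (Cf (snd e)) (restr (Ef E (snd e)) y) e"
    unfolding Uplus_def y_def by auto
  define f where "f = snd e"
  have f: "f \<in> F" using E_F[OF eE] f_def by simp
  interpret V: cfv "Ef E f" b "Cf f" using cfvF[OF f] .
  let ?X = "restr (Ef E f) x"
  let ?A = "evs R \<inter> Ef E f" and ?C = "ods R \<inter> Ef E f"
  let ?Y = "\<lambda>e. ?X e + int t * (ind ?A e - ind ?C e)"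
  have XB: "inB (Ef E f) b ?X" using acc_inB[OF st_accF[OF xst f]] .
  have Ya: "acceptable (Ef E f) b (Cf f) ?Y" using st_accF[OF yst' f] ry by simp
  have YB: "inB (Ef E f) b ?Y" using acc_inB[OF Ya] .
  have dis: "?A \<inter> ?C = {}" using evs_ods by auto
  have TB: "inB (Ef E f) b (\<lambda>e. ?X e + int t * ind ?A e)" using inB_T[OF XB YB dis] .
  have ni: "\<forall>c\<in>?C. \<not> interesting (Ef E f) b (Cf f) ?Y c"
  proof
    fix c assume c: "c \<in> ?C"
    have cE: "c \<in> E" using c ods_E by auto
    have cf: "snd c = f" using c unfolding Ef_def by auto
    define w where "w = fst c"
    have w: "w \<in> W" using E_W[OF cE] w_def by simp
    interpret U: cfv "Ew E w" b "Cw w" using cfvW[OF w] .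
    let ?Z = "restr (Ew E w) x"
    let ?Aw = "evs R \<inter> Ew E w" and ?Cw = "ods R \<inter> Ew E w"
    have Za: "acceptable (Ew E w) b (Cw w) ?Z" using st_accW[OF xst w] .
    have YwB: "inB (Ew E w) b (\<lambda>e. ?Z e + int t * (ind ?Aw e - ind ?Cw e))"
      using acc_inB[OF st_accW[OF yst' w]] ry by simp
    have disw: "?Aw \<inter> ?Cw = {}" using evs_ods by auto
    have BB: "inB (Ew E w) b (\<lambda>e. ?Z e + int t * ind ?Aw e)"
      using inB_T[OF acc_inB[OF Za] YwB disw] .
    have niA: "\<forall>a\<in>?Aw. \<not> interesting (Ew E w) b (Cw w) ?Z a"
      using st_noblock[OF xst] evs_Up unfolding Ew_def by auto
    have cw: "c \<in> ?Cw" "c \<in> Ew E w" "c \<notin> ?Aw" using c cE w_def evs_ods unfolding Ew_def by auto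
    have "interesting (Ew E w) b (Cw w) (\<lambda>e. ?Z e + int t * (ind ?Aw e - ind ?Cw e)) c"
      using U.cinterest[OF Za _ niA cw _ YwB BB] t by auto
    then have "interesting (Ew E (fst c)) b (Cw (fst c)) (restr (Ew E (fst c)) y) c" using ry w_def by simp
    moreover have "\<not> blocking E b Cw Cf y c" using yst' unfolding stable_def by blast
    ultimately have "\<not> interesting (Ef E (snd c)) b (Cf (snd c)) (restr (Ef E (snd c)) y) c"
      using cE unfolding blocking_def by blast
    then show "\<not> interesting (Ef E f) b (Cf f) ?Y c" using ry cf by simp
  qed
  have CT: "Cf f (\<lambda>e. ?X e + int t * ind ?A e) = ?Y"
    using V.fsidet[OF XB _ TB Ya _ dis ni] t by auto
  have mx: "(\<lambda>e. max (?X e) (?Y e)) = (\<lambda>e. ?X e + int t * ind ?A e)"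
    using max_eq[OF dis, of "int t" ?X] by simp
  have "interesting (Ef E f) b (Cf f) ?X e"
    using V.pref_int[OF XB YB] mx CT fi ry f_def by simp
  then show "e \<in> Uplus E b Cf x" using eE f_def unfolding Uplus_def by auto
qed


lemma evs_card: "2 \<le> card (evs R)"
proof -
  have n2: "nR \<noteq> 2"
  proof
    assume n: "nR = 2"
    have "snd (R ! Suc 0) = snd (R ! 0)" using lf_parts(1)[of 0] n by simp
    moreover have "fst (R ! (Suc 1 mod nR)) = fst (R ! 1)" using es_parts(1)[of 1] n by simp
    then have "fst (R ! 0) = fst (R ! 1)" using n by simp
    ultimately have "R ! 0 = R ! 1" by (simp add: prod_eq_iff)
    then show False using dR n by (simp add: nth_eq_iff_index_eq)
  qed
  then have n4: "2 < nR" using two_le by simp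
  have "{R ! 0, R ! 2} \<subseteq> evs R" unfolding evs_def using n4 by auto
  moreover have "R ! 0 \<noteq> R ! 2" using nth_eq_iff_index_eq[OF dR, of 0 2] n4 Rne by simp
  moreover have "finite (evs R)" unfolding evs_def by simp
  ultimately show ?thesis by (metis card_2_iff card_mono)
qed

end


context setting
begin

lemma route_facts:
  assumes fr: "full_route W F E b Cw Cf xs Rs"
  shows "\<And>i. i < length Rs \<Longrightarrow> rotctx W F E b Cw Cf (xs ! i) (Rs ! i)"
    "\<And>i. i < length Rs \<Longrightarrow> xs ! Suc i = (\<lambda>e. (xs ! i) e + int (tau W F E b Cw Cf (xs ! i) (Rs ! i)) * chi (Rs ! i) e)"
    "\<And>m. m \<le> length Rs \<Longrightarrow> stable W F E b Cw Cf (xs ! m)"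
proof -
  show rc: "rotctx W F E b Cw Cf (xs ! i) (Rs ! i)" if "i < length Rs" for i
    using fr that unfolding full_route_def by unfold_locales auto
  show "xs ! Suc i = (\<lambda>e. (xs ! i) e + int (tau W F E b Cw Cf (xs ! i) (Rs ! i)) * chi (Rs ! i) e)"
    if "i < length Rs" for i using fr that unfolding full_route_def by auto
  show "stable W F E b Cw Cf (xs ! m)" if "m \<le> length Rs" for m
  proof (cases "m < length Rs")
    case True then show ?thesis using rotctx.xst[OF rc[OF True]] by simp
  next
    case False then have "m = length Rs" using that by simp
    then show ?thesis using fr unfolding full_route_def is_xmax_def by simp
  qed
qed

lemma route_mono:
  assumes fr: "full_route W F E b Cw Cf xs Rs" and i: "i < length Rs"
  shows "Uplus E b Cf (xs ! Suc i) \<subseteq> Uplus E b Cf (xs ! i)"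
proof -
  interpret rotctx W F E b Cw Cf "xs ! i" "Rs ! i" using route_facts(1)[OF fr i] .
  have "stable W F E b Cw Cf (xs ! Suc i)" using route_facts(3)[OF fr] i by simp
  then show ?thesis using mono[OF tau_ge1] route_facts(2)[OF fr i] by simp
qed

lemma edge_count:
  assumes fr: "full_route W F E b Cw Cf xs Rs" and eE: "e \<in> E"
  shows "card {i. i < length Rs \<and> e \<in> evs (Rs ! i)} \<le> b e"
proof -
  let ?N = "length Rs"
  let ?cnt = "\<lambda>m. card {i. i < m \<and> e \<in> evs (Rs ! i)}"
  have inv: "int (?cnt m) \<le> (xs ! m) e \<or> (?cnt m \<le> b e \<and> e \<notin> Uplus E b Cf (xs ! m))" if "m \<le> ?N" for m
    using that
  proof (induction m)
    case 0 then show ?case using st_bounds[OF route_facts(3)[OF fr] eE] by simp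
  next
    case (Suc m)
    then have m: "m < ?N" by simp
    interpret rotctx W F E b Cw Cf "xs ! m" "Rs ! m" using route_facts(1)[OF fr m] .
    define t where "t = tau W F E b Cw Cf (xs ! m) (Rs ! m)"
    have t1: "1 \<le> t" using tau_ge1 t_def by simp
    have ye: "(xs ! Suc m) e = (xs ! m) e + int t * chi (Rs ! m) e" using route_facts(2)[OF fr m] t_def by simp
    have IH: "int (?cnt m) \<le> (xs ! m) e \<or> (?cnt m \<le> b e \<and> e \<notin> Uplus E b Cf (xs ! m))"
      using Suc by simp
    have xb: "(xs ! m) e \<le> int (b e)" using x_bounds[OF eE] by simp
    have mono': "e \<notin> Uplus E b Cf (xs ! m) \<Longrightarrow> e \<notin> Uplus E b Cf (xs ! Suc m)"
      using route_mono[OF fr m] by blast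
    have setS: "{i. i < Suc m \<and> e \<in> evs (Rs ! i)} =
      {i. i < m \<and> e \<in> evs (Rs ! i)} \<union> (if e \<in> evs (Rs ! m) then {m} else {})" by (auto simp: less_Suc_eq)
    show ?case
    proof (cases "e \<in> evs (Rs ! m)")
      case True
      then have "e \<in> Uplus E b Cf (xs ! m)" using evs_Up by auto
      then have c: "int (?cnt m) \<le> (xs ! m) e" using IH by blast
      have "chi (Rs ! m) e = 1" using chi_eq[OF dR, of e] True evs_ods by (auto simp: ind_def)
      moreover have "?cnt (Suc m) = Suc (?cnt m)" unfolding setS using True by simp
      ultimately show ?thesis using c ye t1 by simp
    next
      case nev: False
      have cS: "?cnt (Suc m) = ?cnt m" unfolding setS using nev by simp
      show ?thesis
      proof (cases "e \<in> ods (Rs ! m)")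
        case True
        then have "e \<notin> Uplus E b Cf (xs ! m)" using ods_Um Uplus_Uminus by auto
        moreover have "?cnt m \<le> b e" using IH xb by linarith
        ultimately show ?thesis using cS mono' by simp
      next
        case False
        have "chi (Rs ! m) e = 0" using chi_eq[OF dR, of e] False nev by (auto simp: ind_def)
        then show ?thesis using IH cS mono' ye by auto
      qed
    qed
  qed
  have "int (?cnt ?N) \<le> (xs ! ?N) e \<or> ?cnt ?N \<le> b e" using inv[of ?N] by auto
  moreover have "(xs ! ?N) e \<le> int (b e)" using st_bounds[OF route_facts(3)[OF fr] eE] by simp
  ultimately show ?thesis by linarith
qed

lemma card_sum_ind: "finite S \<Longrightarrow> A \<subseteq> S \<Longrightarrow> card A = (\<Sum>e\<in>S. if e \<in> A then 1 else (0::nat))"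
proof -
  assume S: "finite S" and A: "A \<subseteq> S"
  have "(\<Sum>e\<in>S. if e \<in> A then 1 else (0::nat)) = (\<Sum>e\<in>{e\<in>S. e \<in> A}. 1)"
    using sum.inter_filter[OF S, of "\<lambda>_. (1::nat)" "\<lambda>e. e \<in> A"] by simp
  also have "{e\<in>S. e \<in> A} = A" using A by auto
  finally show ?thesis by simp
qed

theorem main:
  assumes fr: "full_route W F E b Cw Cf xs Rs"
  shows "2 * length Rs \<le> Max (b ` E) * card E"
proof -
  let ?N = "length Rs"
  have evsE: "\<And>i. i < ?N \<Longrightarrow> evs (Rs ! i) \<subseteq> E"
    using route_facts(1)[OF fr] rotctx.evs_E by blast
  have "2 * ?N = (\<Sum>i<?N. 2)" by simp
  also have "\<dots> \<le> (\<Sum>i<?N. card (evs (Rs ! i)))"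
    using route_facts(1)[OF fr] rotctx.evs_card by (intro sum_mono) blast
  also have "\<dots> = (\<Sum>i<?N. \<Sum>e\<in>E. if e \<in> evs (Rs ! i) then 1 else 0)"
    using card_sum_ind[OF finE] evsE by (intro sum.cong) auto
  also have "\<dots> = (\<Sum>e\<in>E. \<Sum>i<?N. if e \<in> evs (Rs ! i) then 1 else 0)"
    by (rule sum.swap)
  also have "\<dots> = (\<Sum>e\<in>E. card {i. i < ?N \<and> e \<in> evs (Rs ! i)})"
  proof (rule sum.cong)
    fix e
    have "card {i. i < ?N \<and> e \<in> evs (Rs ! i)} = (\<Sum>i<?N. if i \<in> {i. i < ?N \<and> e \<in> evs (Rs ! i)} then 1 else 0)"
      by (rule card_sum_ind) auto
    then show "(\<Sum>i<?N. if e \<in> evs (Rs ! i) then 1 else 0) = card {i. i < ?N \<and> e \<in> evs (Rs ! i)}"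
      by simp
  qed simp
  also have "\<dots> \<le> (\<Sum>e\<in>E. b e)" using edge_count[OF fr] by (intro sum_mono) blast
  also have "\<dots> \<le> card E * Max (b ` E)"
    using sum_bounded_above[of E b "Max (b ` E)"] finE by simp
  finally show ?thesis by (simp add: mult.commute)
qed

end

theorem lemma6p2:
  fixes W :: "'w set" and F :: "'f set" and E :: "('w \<times> 'f) set"
    and b :: "'w \<times> 'f \<Rightarrow> nat"
    and Cw :: "'w \<Rightarrow> ('w, 'f) cfun" and Cf :: "'f \<Rightarrow> ('w, 'f) cfun"
    and xs :: "('w, 'f) vec list" and Rs :: "('w \<times> 'f) list list"
  assumes "finite W" and "finite F" and "E \<subseteq> W \<times> F"
    and "\<forall>w\<in>W. choice_fun (Ew E w) b (Cw w)"
    and "\<forall>f\<in>F. choice_fun (Ef E f) b (Cf f)"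
    and "full_route W F E b Cw Cf xs Rs"
  shows "2 * length Rs \<le> Max (b ` E) * card E"
proof -
  interpret setting W F E b Cw Cf using assms(1-5) by unfold_locales
  show ?thesis using main[OF assms(6)] .
qed

end
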